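(* Let $\Phi,\Psi$ be ergodic random measures on $\mathbb R^d$ (on the same probability space) with positive finite intensities $\lambda_\Phi,\lambda_\Psi$. Let $F:\Omega\times\mathbb R^d\times\mathbb R^d\to[0,\infty)$ be measurable and flow-adapted, such that almost surely $F_\omega$ is a stable constrained density for $(\Phi_\omega,\Psi_\omega)$. Then almost surely: (i) if $\lambda_\Phi=\lambda_\Psi$, $F_\omega$ is balancing, i.e. the set of unexhausted sites has $\Phi_\omega$-measure $0$ and the set of unsated centers has $\Psi_\omega$-measure $0$; (ii) if $\lambda_\Phi<\lambda_\Psi$, there is no unexhausted site, and the set of unsated centers has infinite $\Psi_\omega$-measure; (iii) if $\lambda_\Phi>\lambda_\Psi$, there is no unsated center, and the set of unexhausted sites has infinite $\Phi_\omega$-measure.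
   Context: Random setup: measurable space $(\Omega,\mathcal F)$ with measurable flow $(\theta_s)_{s\in\mathbb R^d}$ ($(\omega,s)\mapsto\theta_s\omega$ measurable, $\theta_0=\mathrm{id}$, $\theta_s\theta_t=\theta_{s+t}$) and probability $\mathbb P$. Shifts act on measures by $(\theta_s\mu)(B)=\mu(B+s)$ and on functions of two variables by $(\theta_sf)(x,y)=f(x+s,y+s)$; $G$ is flow-adapted if $G(\theta_s\omega)=\theta_sG(\omega)$. A random measure is a measurable $\Phi:\Omega\to M$ ($M$: non-negative locally finite Borel measures on $\mathbb R^d$); stationary if $\mathbb P$ is invariant under all $\theta_s$ and $\Phi$ is flow-adapted; ergodic if also invariant events have probability 0 or 1. Intensity $\lambda$: $\mathbb E\Phi(B)=\lambda\mathcal L_d(B)$. Densities and stability for $(\varphi,\psi)$: a non-negative measurable $f$ on $\mathbb R^d\times\mathbb R^d$ is a constrained density if $\int f(x,\xi)\psi(d\xi)\le1$ for all $x$, $\int f(x,\xi)\varphi(dx)\le1$ for all $\xi$, and $f\le 1$; balancing if these integrals equal $1$ for $\varphi$-a.e. $x$ and $\psi$-a.e. $\xi$. A site $x_0$ is exhausted if $\int f(x_0,\xi)\psi(d\xi)=1$, else unexhausted; a center $\xi_0$ is sated if $\int f(x,\xi_0)\varphi(dx)=1$, else unsated. $x_0$ desires $\xi_0$ if $f(x_0,\xi_0)<1$ and either $x_0$ is unexhausted or some $\xi_1$ has $|x_0-\xi_1|>|x_0-\xi_0|$ and $f(x_0,\xi_1)>0$. $\xi_0$ desires $x_0$ if $f(x_0,\xi_0)<1$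 and either $\xi_0$ is unsated or some $x_1$ has $|x_1-\xi_0|>|x_0-\xi_0|$ and $f(x_1,\xi_0)>0$. $f$ is stable if no pair desires each other. *)

theory Defs
  imports "HOL-Probability.Probability"
begin

definition measurable_flow :: "'w measure \<Rightarrow> ('v::euclidean_space \<Rightarrow> 'w \<Rightarrow> 'w) \<Rightarrow> bool" where
  "measurable_flow P \<theta> \<longleftrightarrow>
     (\<lambda>(\<omega>, s). \<theta> s \<omega>) \<in> measurable (P \<Otimes>\<^sub>M lborel) P \<and>
     (\<forall>\<omega>\<in>space P. \<theta> 0 \<omega> = \<omega>) \<and>
     (\<forall>s t. \<forall>\<omega>\<in>space P. \<theta> s (\<theta> t \<omega>) = \<theta> (s + t) \<omega>)"

definition locally_finite_borel :: "'v::euclidean_space measure \<Rightarrow> bool" where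
  "locally_finite_borel \<mu> \<longleftrightarrow> sets \<mu> = sets borel \<and> (\<forall>K. compact K \<longrightarrow> emeasure \<mu> K < \<infinity>)"

text \<open>Random measure: measurable map into M, where M carries the sigma-algebra generated
  by the evaluation maps at Borel sets.\<close>
definition random_measure :: "'w measure \<Rightarrow> ('w \<Rightarrow> 'v::euclidean_space measure) \<Rightarrow> bool" where
  "random_measure P \<Phi> \<longleftrightarrow>
     (\<forall>\<omega>\<in>space P. locally_finite_borel (\<Phi> \<omega>)) \<and>
     (\<forall>B\<in>sets borel. (\<lambda>\<omega>. emeasure (\<Phi> \<omega>) B) \<in> borel_measurable P)"

definition flow_adapted_measure :: "'w measure \<Rightarrow> ('v::euclidean_space \<Rightarrow> 'w \<Rightarrow> 'w) \<Rightarrow> ('w \<Rightarrow> 'v measure) \<Rightarrow> bool" where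
  "flow_adapted_measure P \<theta> \<Phi> \<longleftrightarrow>
     (\<forall>s. \<forall>\<omega>\<in>space P. \<forall>B\<in>sets borel.
        emeasure (\<Phi> (\<theta> s \<omega>)) B = emeasure (\<Phi> \<omega>) ((\<lambda>x. x + s) ` B))"

definition stationary_rm :: "'w measure \<Rightarrow> ('v::euclidean_space \<Rightarrow> 'w \<Rightarrow> 'w) \<Rightarrow> ('w \<Rightarrow> 'v measure) \<Rightarrow> bool" where
  "stationary_rm P \<theta> \<Phi> \<longleftrightarrow>
     prob_space P \<and> measurable_flow P \<theta> \<and> random_measure P \<Phi> \<and>
     (\<forall>s. \<forall>A\<in>sets P. emeasure P (\<theta> s -` A \<inter> space P) = emeasure P A) \<and>
     flow_adapted_measure P \<theta> \<Phi>"

definition ergodic_rm :: "'w measure \<Rightarrow> ('v::euclidean_space \<Rightarrow> 'w \<Rightarrow> 'w) \<Rightarrow> ('w \<Rightarrow> 'v measure) \<Rightarrow> bool" where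
  "ergodic_rm P \<theta> \<Phi> \<longleftrightarrow>
     stationary_rm P \<theta> \<Phi> \<and>
     (\<forall>A\<in>sets P. (\<forall>s. \<theta> s -` A \<inter> space P = A) \<longrightarrow> emeasure P A = 0 \<or> emeasure P A = 1)"

definition has_intensity :: "'w measure \<Rightarrow> ('w \<Rightarrow> 'v::euclidean_space measure) \<Rightarrow> real \<Rightarrow> bool" where
  "has_intensity P \<Phi> l \<longleftrightarrow>
     (\<forall>B\<in>sets borel. (\<integral>\<^sup>+\<omega>. emeasure (\<Phi> \<omega>) B \<partial>P) = ennreal l * emeasure lborel B)"

definition flow_adapted_fun :: "'w measure \<Rightarrow> ('v::euclidean_space \<Rightarrow> 'w \<Rightarrow> 'w) \<Rightarrow> ('w \<Rightarrow> 'v \<Rightarrow> 'v \<Rightarrow> real) \<Rightarrow> bool" where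
  "flow_adapted_fun P \<theta> F \<longleftrightarrow>
     (\<forall>s. \<forall>\<omega>\<in>space P. \<forall>x y. F (\<theta> s \<omega>) x y = F \<omega> (x + s) (y + s))"

text \<open>Closed support of a measure; sites are points of supp phi, centers points of supp psi.\<close>
definition supp :: "'v::euclidean_space measure \<Rightarrow> 'v set" where
  "supp \<mu> = {x. \<forall>e>0. emeasure \<mu> (ball x e) > 0}"

definition constrained_density :: "'v::euclidean_space measure \<Rightarrow> 'v measure \<Rightarrow> ('v \<Rightarrow> 'v \<Rightarrow> real) \<Rightarrow> bool" where
  "constrained_density \<phi> \<psi> f \<longleftrightarrow>
     (\<lambda>(x, y). f x y) \<in> borel_measurable borel \<and>
     (\<forall>x y. 0 \<le> f x y \<and> f x y \<le> 1) \<and>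
     (\<forall>x. (\<integral>\<^sup>+\<xi>. ennreal (f x \<xi>) \<partial>\<psi>) \<le> 1) \<and>
     (\<forall>\<xi>. (\<integral>\<^sup>+x. ennreal (f x \<xi>) \<partial>\<phi>) \<le> 1)"

definition exhausted :: "'v::euclidean_space measure \<Rightarrow> ('v \<Rightarrow> 'v \<Rightarrow> real) \<Rightarrow> 'v \<Rightarrow> bool" where
  "exhausted \<psi> f x \<longleftrightarrow> (\<integral>\<^sup>+\<xi>. ennreal (f x \<xi>) \<partial>\<psi>) = 1"

definition sated :: "'v::euclidean_space measure \<Rightarrow> ('v \<Rightarrow> 'v \<Rightarrow> real) \<Rightarrow> 'v \<Rightarrow> bool" where
  "sated \<phi> f \<xi> \<longleftrightarrow> (\<integral>\<^sup>+x. ennreal (f x \<xi>) \<partial>\<phi>) = 1"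

definition site_desires :: "'v::euclidean_space measure \<Rightarrow> ('v \<Rightarrow> 'v \<Rightarrow> real) \<Rightarrow> 'v \<Rightarrow> 'v \<Rightarrow> bool" where
  "site_desires \<psi> f x0 \<xi>0 \<longleftrightarrow> f x0 \<xi>0 < 1 \<and>
     (\<not> exhausted \<psi> f x0 \<or> (\<exists>\<xi>1. dist x0 \<xi>1 > dist x0 \<xi>0 \<and> f x0 \<xi>1 > 0))"

definition center_desires :: "'v::euclidean_space measure \<Rightarrow> ('v \<Rightarrow> 'v \<Rightarrow> real) \<Rightarrow> 'v \<Rightarrow> 'v \<Rightarrow> bool" where
  "center_desires \<phi> f \<xi>0 x0 \<longleftrightarrow> f x0 \<xi>0 < 1 \<and>
     (\<not> sated \<phi> f \<xi>0 \<or> (\<exists>x1. dist x1 \<xi>0 > dist x0 \<xi>0 \<and> f x1 \<xi>0 > 0))"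

definition stable :: "'v::euclidean_space measure \<Rightarrow> 'v measure \<Rightarrow> ('v \<Rightarrow> 'v \<Rightarrow> real) \<Rightarrow> bool" where
  "stable \<phi> \<psi> f \<longleftrightarrow>
     (\<forall>x0\<in>supp \<phi>. \<forall>\<xi>0\<in>supp \<psi>. \<not> (site_desires \<psi> f x0 \<xi>0 \<and> center_desires \<phi> f \<xi>0 x0))"

end

theory Submission
  imports Defs
begin

lemma kernel_nn_meas:
  fixes \<kappa> :: "'a \<Rightarrow> 'v::euclidean_space measure" and g :: "'a \<Rightarrow> 'v \<Rightarrow> ennreal"
  assumes sets: "\<And>a. a\<in>space N \<Longrightarrow> sets (\<kappa> a) = sets borel"
    and fin: "\<And>a n. a\<in>space N \<Longrightarrow> emeasure (\<kappa> a) (cball 0 n) < \<infinity>"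
    and em: "\<And>B. B\<in>sets borel \<Longrightarrow> (\<lambda>a. emeasure (\<kappa> a) B) \<in> borel_measurable N"
    and g: "(\<lambda>(a,x). g a x) \<in> borel_measurable (N \<Otimes>\<^sub>M borel)"
  shows "(\<lambda>a. \<integral>\<^sup>+x. g a x \<partial>\<kappa> a) \<in> borel_measurable N"
proof -
  define c where "c n a = enn2real (emeasure (\<kappa> a) (cball 0 (real n)))" for n a
  define K where "K n a = density (\<kappa> a) (\<lambda>x. ennreal (1 / (1 + c n a)) * indicator (cball 0 (real n)) x)" for n a
  have cm: "(\<lambda>a. c n a) \<in> borel_measurable N" for n
    unfolding c_def by (intro borel_measurable_enn2real em) auto
  have c0: "c n a \<ge> 0" for n a unfolding c_def by simp
  have ceq: "emeasure (\<kappa> a) (cball 0 (real n)) = ennreal (c n a)" if "a \<in> space N" for a n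
    unfolding c_def using fin[OF that, of "real n"] by (simp add: ennreal_enn2real_if)
  have cb[measurable]: "cball (0::'v) r \<in> sets borel" for r by (simp add: borel_closed)
  have Kem: "emeasure (K n a) A = ennreal (1 / (1 + c n a)) * emeasure (\<kappa> a) (A \<inter> cball 0 (real n))"
    if "a \<in> space N" "A \<in> sets borel" for a n A
  proof -
    have "emeasure (K n a) A = (\<integral>\<^sup>+x. ennreal (1 / (1 + c n a)) * indicator (cball 0 (real n)) x * indicator A x \<partial>\<kappa> a)"
      unfolding K_def using that sets[OF that(1)]
      by (subst emeasure_density) (auto intro!: borel_measurable_times borel_measurable_indicator simp: measurable_cong_sets[OF sets[OF that(1)] refl] nn_integral_set_ennreal intro!: nn_integral_cong split: split_indicator)
    also have "\<dots> = ennreal (1 / (1 + c n a)) * (\<integral>\<^sup>+x. indicator (A \<inter> cball 0 (real n)) x \<partial>\<kappa> a)"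
      using that sets[OF that(1)]
      by (subst nn_integral_cmult[symmetric]) (auto simp: measurable_cong_sets[OF sets[OF that(1)] refl] intro!: nn_integral_cong split: split_indicator)
    also have "\<dots> = ennreal (1 / (1 + c n a)) * emeasure (\<kappa> a) (A \<inter> cball 0 (real n))"
      using that sets[OF that(1)] by (subst nn_integral_indicator) auto
    finally show ?thesis .
  qed
  have Km: "K n \<in> measurable N (subprob_algebra borel)" for n
  proof (rule measurable_subprob_algebra)
    fix a assume a: "a \<in> space N"
    show "sets (K n a) = sets borel" unfolding K_def using sets[OF a] by simp
    have "emeasure (K n a) (space (K n a)) = ennreal (1 / (1 + c n a)) * ennreal (c n a)"
      using Kem[OF a, of UNIV n] ceq[OF a] sets[OF a] sets_eq_imp_space_eq[OF sets[OF a]] unfolding K_def by simp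
    also have "\<dots> = ennreal (c n a / (1 + c n a))"
      using c0 by (simp add: ennreal_mult'[symmetric])
    also have "\<dots> \<le> 1" using c0[of n a] by (simp add: divide_le_eq_1)
    finally have le: "emeasure (K n a) (space (K n a)) \<le> 1" .
    have sp: "space (K n a) = UNIV" using sets_eq_imp_space_eq[OF sets[OF a]] by (simp add: K_def)
    show "subprob_space (K n a)"
      by (rule subprob_spaceI[OF le]) (simp add: sp)
  next
    fix A :: "'v set" assume A: "A \<in> sets borel"
    have "(\<lambda>a. ennreal (1 / (1 + c n a)) * emeasure (\<kappa> a) (A \<inter> cball 0 (real n))) \<in> borel_measurable N"
      using cm[of n] em[of "A \<inter> cball 0 (real n)"] A by measurable
    then show "(\<lambda>a. emeasure (K n a) A) \<in> borel_measurable N"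
      by (rule measurable_cong[THEN iffD1, rotated]) (simp add: Kem A)
  qed
  have step: "(\<lambda>a. ennreal (1 + c n a) * (\<integral>\<^sup>+x. g a x \<partial>K n a)) \<in> borel_measurable N" for n
  proof -
    have "(\<lambda>a. \<integral>\<^sup>+x. g a x \<partial>K n a) \<in> borel_measurable N"
      by (rule nn_integral_measurable_subprob_algebra2[OF g Km])
    then show ?thesis using cm[of n] by measurable
  qed
  have eq: "ennreal (1 + c n a) * (\<integral>\<^sup>+x. g a x \<partial>K n a) = (\<integral>\<^sup>+x. indicator (cball 0 (real n)) x * g a x \<partial>\<kappa> a)"
    if a: "a \<in> space N" for a n
  proof -
    have gm: "g a \<in> borel_measurable borel"
      using measurable_Pair2[OF g a] by simp
    have "(\<integral>\<^sup>+x. g a x \<partial>K n a) = (\<integral>\<^sup>+x. ennreal (1 / (1 + c n a)) * (indicator (cball 0 (real n)) x * g a x) \<partial>\<kappa> a)"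
      unfolding K_def using sets[OF a] gm
      by (subst nn_integral_density) (auto simp: mult.assoc measurable_cong_sets[OF sets[OF a] refl])
    also have "\<dots> = ennreal (1 / (1 + c n a)) * (\<integral>\<^sup>+x. indicator (cball 0 (real n)) x * g a x \<partial>\<kappa> a)"
      using sets[OF a] gm by (subst nn_integral_cmult) (auto simp: measurable_cong_sets[OF sets[OF a] refl])
    finally have "ennreal (1 + c n a) * (\<integral>\<^sup>+x. g a x \<partial>K n a) = (ennreal (1 + c n a) * ennreal (1 / (1 + c n a))) * (\<integral>\<^sup>+x. indicator (cball 0 (real n)) x * g a x \<partial>\<kappa> a)"
      by (simp add: mult.assoc)
    also have "ennreal (1 + c n a) * ennreal (1 / (1 + c n a)) = 1"
    proof -
      have r: "(1 + c n a) * (1 / (1 + c n a)) = 1" using c0[of n a] by (simp add: field_simps)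
      have "ennreal (1 + c n a) * ennreal (1 / (1 + c n a)) = ennreal ((1 + c n a) * (1 / (1 + c n a)))"
        using c0[of n a] by (intro ennreal_mult[symmetric]) auto
      then show ?thesis by (simp only: r ennreal_1)
    qed
    finally show ?thesis by simp
  qed
  have sup: "(\<integral>\<^sup>+x. g a x \<partial>\<kappa> a) = (SUP n. \<integral>\<^sup>+x. indicator (cball 0 (real n)) x * g a x \<partial>\<kappa> a)"
    if a: "a \<in> space N" for a
  proof -
    have gm: "g a \<in> borel_measurable (\<kappa> a)"
      using measurable_Pair2[OF g a] by (simp add: measurable_cong_sets[OF sets[OF a] refl])
    have "(SUP n. \<integral>\<^sup>+x. indicator (cball 0 (real n)) x * g a x \<partial>\<kappa> a) = (\<integral>\<^sup>+x. (SUP n. indicator (cball 0 (real n)) x * g a x) \<partial>\<kappa> a)"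
    proof (rule nn_integral_monotone_convergence_SUP[symmetric])
      show "incseq (\<lambda>n x. indicator (cball 0 (real n)) x * g a x :: ennreal)"
      proof (intro incseq_SucI le_funI mult_right_mono)
        fix n x show "indicator (cball 0 (real n)) x \<le> (indicator (cball 0 (real (Suc n))) x :: ennreal)"
          by (simp split: split_indicator)
      qed simp
      show "(\<lambda>x. indicator (cball 0 (real i)) x * g a x) \<in> borel_measurable (\<kappa> a)" for i
      proof -
        have [measurable]: "cball 0 (real i) \<in> sets (\<kappa> a)" using sets[OF a] by simp
        note gm[measurable]
        show ?thesis by measurable
      qed
    qed
    also have "(\<lambda>x. (SUP n. indicator (cball 0 (real n)) x * g a x)) = g a"
    proof
      fix x :: 'v
      obtain m :: nat where "norm x \<le> real m" using real_arch_simple by blast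
      have "(SUP n. indicator (cball 0 (real n)) x * g a x) = g a x"
      proof (rule antisym)
        show "(SUP n. indicator (cball 0 (real n)) x * g a x) \<le> g a x"
          by (intro SUP_least) (auto split: split_indicator)
        show "g a x \<le> (SUP n. indicator (cball 0 (real n)) x * g a x)"
          using \<open>norm x \<le> real m\<close> by (intro SUP_upper2[of m]) auto
      qed
      then show "(SUP n. indicator (cball 0 (real n)) x * g a x) = g a x" .
    qed
    finally show ?thesis by simp
  qed
  have "(\<lambda>a. SUP n. ennreal (1 + c n a) * (\<integral>\<^sup>+x. g a x \<partial>K n a)) \<in> borel_measurable N"
    using step by measurable
  then show ?thesis
    by (rule measurable_cong[THEN iffD1, rotated]) (simp add: eq sup)
qed

lemma lfb_sf:
  fixes \<mu> :: "'v::euclidean_space measure"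
  assumes "locally_finite_borel \<mu>"
  shows "sigma_finite_measure \<mu>"
proof
  have s: "sets \<mu> = sets borel" and f: "\<And>K. compact K \<Longrightarrow> emeasure \<mu> K < \<infinity>"
    using assms by (auto simp: locally_finite_borel_def)
  have sp: "space \<mu> = UNIV" using sets_eq_imp_space_eq[OF s] by simp
  show "\<exists>A. countable A \<and> A \<subseteq> sets \<mu> \<and> \<Union> A = space \<mu> \<and> (\<forall>a\<in>A. emeasure \<mu> a \<noteq> \<infinity>)"
  proof (intro exI[of _ "range (\<lambda>n::nat. cball (0::'v) (real n))"] conjI)
    show "\<Union> (range (\<lambda>n::nat. cball (0::'v) (real n))) = space \<mu>"
    proof
      show "\<Union> (range (\<lambda>n::nat. cball (0::'v) (real n))) \<subseteq> space \<mu>" by (simp add: sp)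
      show "space \<mu> \<subseteq> \<Union> (range (\<lambda>n::nat. cball (0::'v) (real n)))"
      proof
        fix x :: 'v
        obtain n :: nat where "norm x \<le> real n" using real_arch_simple by blast
        then show "x \<in> \<Union> (range (\<lambda>n::nat. cball (0::'v) (real n)))" by auto
      qed
    qed
    show "range (\<lambda>n::nat. cball (0::'v) (real n)) \<subseteq> sets \<mu>"
    proof
      fix a assume "a \<in> range (\<lambda>n::nat. cball (0::'v) (real n))"
      then obtain n :: nat where "a = cball 0 (real n)" by blast
      then show "a \<in> sets \<mu>" unfolding s by (simp add: borel_closed)
    qed
    show "\<forall>a\<in>range (\<lambda>n::nat. cball (0::'v) (real n)). emeasure \<mu> a \<noteq> \<infinity>"
    proof
      fix a assume "a \<in> range (\<lambda>n::nat. cball (0::'v) (real n))"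
      then obtain n :: nat where "a = cball 0 (real n)" by blast
      then have "emeasure \<mu> a < \<infinity>" using f[of a] by simp
      then show "emeasure \<mu> a \<noteq> \<infinity>" by simp
    qed
  qed simp
qed

lemma Tonelli:
  assumes "sigma_finite_measure M1" "sigma_finite_measure M2"
    and "case_prod f \<in> borel_measurable (M1 \<Otimes>\<^sub>M M2)"
  shows "(\<integral>\<^sup>+ y. (\<integral>\<^sup>+ x. f x y \<partial>M1) \<partial>M2) = (\<integral>\<^sup>+ x. (\<integral>\<^sup>+ y. f x y \<partial>M2) \<partial>M1)"
  using assms by (intro pair_sigma_finite.Fubini') (auto simp: pair_sigma_finite_def)

abbreviation "B1 \<equiv> ball (0::'v::euclidean_space) 1"

lemma L_eq: "emeasure lborel (ball (c::'v::euclidean_space) 1) = emeasure lborel (B1::'v set)"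
  by (simp add: emeasure_ball)

lemma L_pos: "0 < emeasure lborel (B1::'v::euclidean_space set)"
  by (simp add: emeasure_ball)

lemma L_fin: "emeasure lborel (B1::'v::euclidean_space set) < \<infinity>"
  by (rule emeasure_lborel_ball_finite)

lemma int_plus: "(\<integral>\<^sup>+s. indicator B1 ((x::'v) + s) \<partial>lborel) = emeasure lborel (B1::'v::euclidean_space set)"
proof -
  have "(\<lambda>s. indicator B1 (x + s) :: ennreal) = indicator (ball (-x) 1)"
    by (auto simp: indicator_def dist_norm norm_minus_commute add.commute)
  then show ?thesis by (simp add: emeasure_ball)
qed

lemma int_minus: "(\<integral>\<^sup>+s. indicator B1 ((x::'v) - s) \<partial>lborel) = emeasure lborel (B1::'v::euclidean_space set)"
proof -
  have "(\<lambda>s. indicator B1 (x - s) :: ennreal) = indicator (ball x 1)"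
    by (auto simp: indicator_def dist_norm norm_minus_commute)
  then show ?thesis by (simp add: emeasure_ball)
qed

lemma ball_sub: "dist y x < e \<Longrightarrow> ball y (e - dist y x) \<subseteq> ball x (e::real)"
proof
  fix z assume "dist y x < e" "z \<in> ball y (e - dist y x)"
  then have "dist y z < e - dist y x" by simp
  moreover have "dist x z \<le> dist x y + dist y z" by (rule dist_triangle)
  ultimately show "z \<in> ball x e" by (simp add: dist_commute)
qed

lemma supp_closed:
  assumes sets: "sets \<mu> = sets borel"
  shows "closed (supp (\<mu>::'v::euclidean_space measure))"
  unfolding closed_def open_dist
proof (intro ballI)
  fix x assume "x \<in> - supp \<mu>"
  then obtain e where e: "e > 0" "\<not> emeasure \<mu> (ball x e) > 0" by (auto simp: supp_def)
  have "\<forall>y. dist y x < e \<longrightarrow> y \<in> - supp \<mu>"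
  proof (intro allI impI)
    fix y assume y: "dist y x < e"
    have "emeasure \<mu> (ball y (e - dist y x)) \<le> emeasure \<mu> (ball x e)"
      using ball_sub[OF y] sets by (intro emeasure_mono) auto
    then have "\<not> emeasure \<mu> (ball y (e - dist y x)) > 0" using e by auto
    then show "y \<in> - supp \<mu>" using y unfolding supp_def
      by (auto intro!: exI[of _ "e - dist y x"])
  qed
  then show "\<exists>d>0. \<forall>y. dist y x < d \<longrightarrow> y \<in> - supp \<mu>" using e(1) by blast
qed

lemma supp_null:
  fixes \<mu> :: "'v::euclidean_space measure"
  assumes "sets \<mu> = sets borel"
  shows "emeasure \<mu> (- supp \<mu>) = 0"
proof -
  define \<F> where "\<F> = {ball x e |x e. e > 0 \<and> emeasure \<mu> (ball x e) = 0}"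
  obtain \<F>' where F': "\<F>' \<subseteq> \<F>" "countable \<F>'" "\<Union>\<F>' = \<Union>\<F>"
    using Lindelof[of \<F>] unfolding \<F>_def by blast
  have "\<Union>\<F> = - supp \<mu>"
  proof safe
    fix x X assume "X \<in> \<F>" "x \<in> X" "x \<in> supp \<mu>"
    then obtain c e where ce: "X = ball c e" "e > 0" "emeasure \<mu> (ball c e) = 0" by (auto simp: \<F>_def)
    have d: "dist x c < e" using \<open>x \<in> X\<close> ce by (simp add: dist_commute)
    have "emeasure \<mu> (ball x (e - dist x c)) \<le> emeasure \<mu> (ball c e)"
      using ball_sub[OF d] assms by (intro emeasure_mono) auto
    then have "emeasure \<mu> (ball x (e - dist x c)) = 0" using ce by simp
    moreover have "emeasure \<mu> (ball x (e - dist x c)) > 0" using \<open>x \<in> supp \<mu>\<close> d by (auto simp: supp_def)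
    ultimately show False by simp
  next
    fix x assume "x \<notin> supp \<mu>"
    then obtain e where e: "e > 0" "emeasure \<mu> (ball x e) = 0" by (auto simp: supp_def)
    then have "ball x e \<in> \<F>" unfolding \<F>_def by blast
    moreover have "x \<in> ball x e" using e by simp
    ultimately show "x \<in> \<Union>\<F>" by blast
  qed
  moreover have "(\<Union>X\<in>\<F>'. X) \<in> null_sets \<mu>"
  proof (rule null_sets_UN')
    show "countable \<F>'" by (rule F'(2))
    fix X assume "X \<in> \<F>'"
    then have "X \<in> \<F>" using F'(1) by blast
    then obtain c e where "X = ball c e" "emeasure \<mu> (ball c e) = 0" unfolding \<F>_def by blast
    then show "X \<in> null_sets \<mu>" using assms by (simp add: null_sets_def)
  qed
  then have "emeasure \<mu> (\<Union>\<F>') = 0" by (auto simp: null_sets_def)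
  ultimately show ?thesis using F'(3) by metis
qed

locale rsetup =
  fixes P :: "'w measure" and \<theta> :: "'v::euclidean_space \<Rightarrow> 'w \<Rightarrow> 'w"
  assumes prob: "prob_space P" and flow: "measurable_flow P \<theta>"
    and inv: "\<And>s A. A \<in> sets P \<Longrightarrow> emeasure P (\<theta> s -` A \<inter> space P) = emeasure P A"
begin

lemma theta_meas: "\<theta> s \<in> measurable P P"
proof -
  have j: "(\<lambda>(\<omega>, s). \<theta> s \<omega>) \<in> measurable (P \<Otimes>\<^sub>M lborel) P" using flow by (simp add: measurable_flow_def)
  have "(\<lambda>\<omega>. (\<omega>, s)) \<in> measurable P (P \<Otimes>\<^sub>M lborel)" by measurable
  from measurable_comp[OF this j] show ?thesis by (simp add: o_def)
qed

lemma theta_space: "\<omega> \<in> space P \<Longrightarrow> \<theta> s \<omega> \<in> space P"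
  using measurable_space[OF theta_meas] by blast

lemma distr_theta: "distr P P (\<theta> s) = P"
  by (rule measure_eqI) (simp_all add: emeasure_distr theta_meas inv)

lemma E_shift: "f \<in> borel_measurable P \<Longrightarrow> (\<integral>\<^sup>+\<omega>. f (\<theta> s \<omega>) \<partial>P) = (\<integral>\<^sup>+\<omega>. f \<omega> \<partial>P)"
  using nn_integral_distr[OF theta_meas, of f s] distr_theta by simp

lemma sfP: "sigma_finite_measure P" using prob prob_space_imp_sigma_finite by auto

definition "RM \<Phi> \<longleftrightarrow> random_measure P \<Phi> \<and> flow_adapted_measure P \<theta> \<Phi>"

lemma RM_lfb: "RM \<Phi> \<Longrightarrow> \<omega> \<in> space P \<Longrightarrow> locally_finite_borel (\<Phi> \<omega>)"
  by (simp add: RM_def random_measure_def)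

lemma RM_sets: "RM \<Phi> \<Longrightarrow> \<omega> \<in> space P \<Longrightarrow> sets (\<Phi> \<omega>) = sets borel"
  using RM_lfb by (simp add: locally_finite_borel_def)

lemma RM_space: "RM \<Phi> \<Longrightarrow> \<omega> \<in> space P \<Longrightarrow> space (\<Phi> \<omega>) = UNIV"
  using sets_eq_imp_space_eq[OF RM_sets] by simp

lemma RM_sf: "RM \<Phi> \<Longrightarrow> \<omega> \<in> space P \<Longrightarrow> sigma_finite_measure (\<Phi> \<omega>)"
  using RM_lfb lfb_sf by blast

lemma RM_meas: "RM \<Phi> \<Longrightarrow> B \<in> sets borel \<Longrightarrow> (\<lambda>\<omega>. emeasure (\<Phi> \<omega>) B) \<in> borel_measurable P"
  by (simp add: RM_def random_measure_def)

lemma RM_int_meas: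
  assumes rm: "RM \<Phi>" and h: "h \<in> measurable N P"
    and g0: "(\<lambda>p. g (fst p) (snd p)) \<in> borel_measurable (N \<Otimes>\<^sub>M borel)"
  shows "(\<lambda>a. \<integral>\<^sup>+x. g a x \<partial>\<Phi> (h a)) \<in> borel_measurable N"
proof -
  have g: "(\<lambda>(a,x). g a x) \<in> borel_measurable (N \<Otimes>\<^sub>M borel)" using g0 by (simp add: split_beta')
  show ?thesis
proof (rule kernel_nn_meas[OF _ _ _ g])
  fix a assume a: "a \<in> space N"
  then have ha: "h a \<in> space P" using measurable_space[OF h] by blast
  show "sets (\<Phi> (h a)) = sets borel" using RM_sets[OF rm ha] .
  fix n :: real
  show "emeasure (\<Phi> (h a)) (cball 0 n) < \<infinity>"
    using RM_lfb[OF rm ha] by (simp add: locally_finite_borel_def)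
next
  fix B :: "'v set" assume "B \<in> sets borel"
  from measurable_compose[OF h RM_meas[OF rm this]]
  show "(\<lambda>a. emeasure (\<Phi> (h a)) B) \<in> borel_measurable N" .
qed
qed

lemma RM_meas1: "RM \<Phi> \<Longrightarrow> \<omega> \<in> space P \<Longrightarrow> f \<in> borel_measurable borel \<Longrightarrow> f \<in> borel_measurable (\<Phi> \<omega>)"
  by (simp add: measurable_cong_sets[OF RM_sets refl])

lemma RM_meas_l: "RM \<Phi> \<Longrightarrow> \<omega> \<in> space P \<Longrightarrow> f \<in> borel_measurable (borel \<Otimes>\<^sub>M N) \<Longrightarrow> f \<in> borel_measurable (\<Phi> \<omega> \<Otimes>\<^sub>M N)"
  by (simp add: measurable_cong_sets[OF sets_pair_measure_cong[OF RM_sets refl] refl])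

lemma RM_meas_r: "RM \<Phi> \<Longrightarrow> \<omega> \<in> space P \<Longrightarrow> f \<in> borel_measurable (N \<Otimes>\<^sub>M borel) \<Longrightarrow> f \<in> borel_measurable (N \<Otimes>\<^sub>M \<Phi> \<omega>)"
  by (simp add: measurable_cong_sets[OF sets_pair_measure_cong[OF refl RM_sets] refl])

lemma RM_distr:
  assumes rm: "RM \<Phi>" and w: "\<omega> \<in> space P"
  shows "\<Phi> (\<theta> s \<omega>) = distr (\<Phi> \<omega>) borel (\<lambda>x. x - s)"
proof (rule measure_eqI)
  have tw: "\<theta> s \<omega> \<in> space P" using theta_space[OF w] .
  show "sets (\<Phi> (\<theta> s \<omega>)) = sets (distr (\<Phi> \<omega>) borel (\<lambda>x. x - s))"
    using RM_sets[OF rm tw] by simp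
  fix B assume "B \<in> sets (\<Phi> (\<theta> s \<omega>))"
  then have B: "B \<in> sets borel" using RM_sets[OF rm tw] by simp
  have m: "(\<lambda>x. x - s) \<in> measurable (\<Phi> \<omega>) borel"
    using RM_sets[OF rm w] by (simp add: measurable_cong_sets[OF RM_sets[OF rm w] refl])
  have eq: "(\<lambda>x. x - s) -` B \<inter> space (\<Phi> \<omega>) = (\<lambda>x. x + s) ` B"
    using RM_space[OF rm w] by (auto simp: image_iff) (metis diff_add_cancel)
  have "emeasure (\<Phi> (\<theta> s \<omega>)) B = emeasure (\<Phi> \<omega>) ((\<lambda>x. x + s) ` B)"
    using rm w B by (simp add: RM_def flow_adapted_measure_def)
  also have "\<dots> = emeasure (distr (\<Phi> \<omega>) borel (\<lambda>x. x - s)) B"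
    using B m by (simp add: emeasure_distr eq)
  finally show "emeasure (\<Phi> (\<theta> s \<omega>)) B = emeasure (distr (\<Phi> \<omega>) borel (\<lambda>x. x - s)) B" .
qed

lemma RM_shift:
  assumes rm: "RM \<Phi>" and w: "\<omega> \<in> space P" and f: "f \<in> borel_measurable borel"
  shows "(\<integral>\<^sup>+x. f x \<partial>\<Phi> (\<theta> s \<omega>)) = (\<integral>\<^sup>+x. f (x - s) \<partial>\<Phi> \<omega>)"
proof -
  have m: "(\<lambda>x. x - s) \<in> measurable (\<Phi> \<omega>) borel"
    by (simp add: measurable_cong_sets[OF RM_sets[OF rm w] refl])
  have f': "f \<in> borel_measurable (distr (\<Phi> \<omega>) borel (\<lambda>x. x - s))" using f by simp
  show ?thesis unfolding RM_distr[OF rm w] by (rule nn_integral_distr[OF m f'])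
qed

end

lemma B1_borel[measurable]: "(B1::'v::euclidean_space set) \<in> sets borel" by simp

lemma comp2:
  assumes "(\<lambda>p. k (fst p) (snd p)) \<in> measurable (M \<Otimes>\<^sub>M N) K"
  shows "a \<in> measurable X M \<Longrightarrow> b \<in> measurable X N \<Longrightarrow> (\<lambda>x. k (a x) (b x)) \<in> measurable X K"
  using measurable_compose[OF measurable_Pair assms] by simp

lemma sf_lborel: "sigma_finite_measure (lborel :: 'v::euclidean_space measure)"
  by (rule sigma_finite_lborel)

context rsetup begin

lemma campbell1:
  assumes rm: "RM \<Phi>"
    and km: "(\<lambda>p. k (fst p) (snd p)) \<in> borel_measurable (P \<Otimes>\<^sub>M borel)"
    and ka: "\<And>s \<omega> x. \<omega> \<in> space P \<Longrightarrow> k (\<theta> s \<omega>) x = k \<omega> (x + s)"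
  shows "emeasure lborel (B1::'v set) * (\<integral>\<^sup>+\<omega>. \<integral>\<^sup>+x. k \<omega> x \<partial>\<Phi> \<omega> \<partial>P)
       = (\<integral>\<^sup>+s. (\<integral>\<^sup>+\<omega>. \<integral>\<^sup>+x. indicator B1 x * k \<omega> x \<partial>\<Phi> \<omega> \<partial>P) \<partial>lborel)"
proof -
  note kc[measurable] = comp2[OF km]
  define L where "L = emeasure lborel (B1::'v set)"
  define J where "J \<omega> s = (\<integral>\<^sup>+x. indicator B1 (x - s) * k \<omega> x \<partial>\<Phi> \<omega>)" for \<omega> s
  define J0 where "J0 \<omega> = (\<integral>\<^sup>+x. indicator B1 x * k \<omega> x \<partial>\<Phi> \<omega>)" for \<omega>
  have kw[measurable]: "k \<omega> \<in> borel_measurable borel" if "\<omega> \<in> space P" for \<omega>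
    using that by measurable
  have Km: "(\<lambda>\<omega>. \<integral>\<^sup>+x. k \<omega> x \<partial>\<Phi> \<omega>) \<in> borel_measurable P"
    by (rule RM_int_meas[OF rm measurable_ident_sets[OF refl]]) measurable
  have J0m: "J0 \<in> borel_measurable P"
    unfolding J0_def by (rule RM_int_meas[OF rm measurable_ident_sets[OF refl]]) measurable
  have Jm: "(\<lambda>p. J (fst p) (snd p)) \<in> borel_measurable (P \<Otimes>\<^sub>M lborel)"
    unfolding J_def by (rule RM_int_meas[OF rm, where h=fst]) measurable
  have step1: "L * (\<integral>\<^sup>+x. k \<omega> x \<partial>\<Phi> \<omega>) = (\<integral>\<^sup>+x. \<integral>\<^sup>+s. indicator B1 (x - s) * k \<omega> x \<partial>lborel \<partial>\<Phi> \<omega>)"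
    if w: "\<omega> \<in> space P" for \<omega>
  proof -
    have "L * (\<integral>\<^sup>+x. k \<omega> x \<partial>\<Phi> \<omega>) = (\<integral>\<^sup>+x. L * k \<omega> x \<partial>\<Phi> \<omega>)"
      using RM_meas1[OF rm w kw[OF w]] by (rule nn_integral_cmult[symmetric])
    also have "\<dots> = (\<integral>\<^sup>+x. \<integral>\<^sup>+s. indicator B1 (x - s) * k \<omega> x \<partial>lborel \<partial>\<Phi> \<omega>)"
    proof (rule nn_integral_cong)
      fix x
      have "(\<integral>\<^sup>+s. indicator B1 (x - s) * k \<omega> x \<partial>lborel) = (\<integral>\<^sup>+s. indicator B1 (x - s) \<partial>lborel) * k \<omega> x"
        by (rule nn_integral_multc) measurable
      then show "L * k \<omega> x = (\<integral>\<^sup>+s. indicator B1 (x - s) * k \<omega> x \<partial>lborel)"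
        by (simp add: int_minus L_def)
    qed
    finally show ?thesis .
  qed
  have step2: "(\<integral>\<^sup>+x. \<integral>\<^sup>+s. indicator B1 (x - s) * k \<omega> x \<partial>lborel \<partial>\<Phi> \<omega>) = (\<integral>\<^sup>+s. J \<omega> s \<partial>lborel)"
    if w: "\<omega> \<in> space P" for \<omega>
    unfolding J_def
  proof (rule Tonelli[symmetric, OF RM_sf[OF rm w] sf_lborel])
    show "(\<lambda>(x, s). indicator B1 (x - s) * k \<omega> x) \<in> borel_measurable (\<Phi> \<omega> \<Otimes>\<^sub>M lborel)"
      by (rule RM_meas_l[OF rm w]) (use w in measurable)
  qed
  have step3: "(\<integral>\<^sup>+\<omega>. \<integral>\<^sup>+s. J \<omega> s \<partial>lborel \<partial>P) = (\<integral>\<^sup>+s. \<integral>\<^sup>+\<omega>. J \<omega> s \<partial>P \<partial>lborel)"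
    by (rule Tonelli[symmetric, OF sfP sf_lborel]) (use Jm in \<open>simp add: split_beta'\<close>)
  have step4: "(\<integral>\<^sup>+\<omega>. J \<omega> s \<partial>P) = (\<integral>\<^sup>+\<omega>. J0 \<omega> \<partial>P)" for s
  proof -
    have "(\<integral>\<^sup>+\<omega>. J \<omega> s \<partial>P) = (\<integral>\<^sup>+\<omega>. J0 (\<theta> s \<omega>) \<partial>P)"
    proof (rule nn_integral_cong)
      fix \<omega> assume "\<omega> \<in> space P"
      then have w: "\<omega> \<in> space P" by simp
      have tw: "\<theta> s \<omega> \<in> space P" by (rule theta_space[OF w])
      have "J0 (\<theta> s \<omega>) = (\<integral>\<^sup>+x. indicator B1 (x - s) * k (\<theta> s \<omega>) (x - s) \<partial>\<Phi> \<omega>)"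
        unfolding J0_def by (rule RM_shift[OF rm w]) (use tw in measurable)
      also have "\<dots> = J \<omega> s" unfolding J_def using ka[OF w] by simp
      finally show "J \<omega> s = J0 (\<theta> s \<omega>)" by simp
    qed
    also have "\<dots> = (\<integral>\<^sup>+\<omega>. J0 \<omega> \<partial>P)" by (rule E_shift[OF J0m])
    finally show ?thesis .
  qed
  have "L * (\<integral>\<^sup>+\<omega>. \<integral>\<^sup>+x. k \<omega> x \<partial>\<Phi> \<omega> \<partial>P) = (\<integral>\<^sup>+\<omega>. L * \<integral>\<^sup>+x. k \<omega> x \<partial>\<Phi> \<omega> \<partial>P)"
    using Km by (rule nn_integral_cmult[symmetric])
  also have "\<dots> = (\<integral>\<^sup>+\<omega>. \<integral>\<^sup>+s. J \<omega> s \<partial>lborel \<partial>P)"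
    by (rule nn_integral_cong) (simp add: step1 step2)
  also have "\<dots> = (\<integral>\<^sup>+s. \<integral>\<^sup>+\<omega>. J0 \<omega> \<partial>P \<partial>lborel)" by (simp add: step3 step4)
  finally show ?thesis by (simp add: L_def J0_def)
qed

end

lemma comp3:
  assumes "(\<lambda>p. G (fst p) (fst (snd p)) (snd (snd p))) \<in> measurable (M \<Otimes>\<^sub>M (N \<Otimes>\<^sub>M N')) K"
  shows "a \<in> measurable X M \<Longrightarrow> b \<in> measurable X N \<Longrightarrow> c \<in> measurable X N' \<Longrightarrow> (\<lambda>x. G (a x) (b x) (c x)) \<in> measurable X K"
  using measurable_compose[OF measurable_Pair[OF _ measurable_Pair] assms] by simp

context rsetup begin

lemma swap3:
  assumes rm: "RM \<Phi>" "RM \<Psi>" and w: "\<omega> \<in> space P"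
    and f: "(\<lambda>p. f (fst p) (fst (snd p)) (snd (snd p))) \<in> borel_measurable (borel \<Otimes>\<^sub>M (borel \<Otimes>\<^sub>M (lborel::'v measure)))"
  shows "(\<integral>\<^sup>+x. \<integral>\<^sup>+\<xi>. \<integral>\<^sup>+s. f x \<xi> s \<partial>lborel \<partial>\<Psi> \<omega> \<partial>\<Phi> \<omega>) = (\<integral>\<^sup>+s. \<integral>\<^sup>+x. \<integral>\<^sup>+\<xi>. f x \<xi> s \<partial>\<Psi> \<omega> \<partial>\<Phi> \<omega> \<partial>lborel)"
proof -
  note fc[measurable] = comp3[OF f]
  have "(\<integral>\<^sup>+x. \<integral>\<^sup>+\<xi>. \<integral>\<^sup>+s. f x \<xi> s \<partial>lborel \<partial>\<Psi> \<omega> \<partial>\<Phi> \<omega>) = (\<integral>\<^sup>+x. \<integral>\<^sup>+s. \<integral>\<^sup>+\<xi>. f x \<xi> s \<partial>\<Psi> \<omega> \<partial>lborel \<partial>\<Phi> \<omega>)"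
  proof (rule nn_integral_cong)
    fix x
    show "(\<integral>\<^sup>+\<xi>. \<integral>\<^sup>+s. f x \<xi> s \<partial>lborel \<partial>\<Psi> \<omega>) = (\<integral>\<^sup>+s. \<integral>\<^sup>+\<xi>. f x \<xi> s \<partial>\<Psi> \<omega> \<partial>lborel)"
    proof (rule Tonelli[symmetric, OF RM_sf[OF rm(2) w] sf_lborel])
      show "(\<lambda>(\<xi>, s). f x \<xi> s) \<in> borel_measurable (\<Psi> \<omega> \<Otimes>\<^sub>M lborel)"
        by (rule RM_meas_l[OF rm(2) w]) measurable
    qed
  qed
  also have "\<dots> = (\<integral>\<^sup>+s. \<integral>\<^sup>+x. \<integral>\<^sup>+\<xi>. f x \<xi> s \<partial>\<Psi> \<omega> \<partial>\<Phi> \<omega> \<partial>lborel)"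
  proof (rule Tonelli[symmetric, OF RM_sf[OF rm(1) w] sf_lborel])
    have "(\<lambda>p. \<integral>\<^sup>+\<xi>. f (fst p) \<xi> (snd p) \<partial>\<Psi> ((\<lambda>_. \<omega>) p)) \<in> borel_measurable (borel \<Otimes>\<^sub>M lborel)"
      by (rule RM_int_meas[OF rm(2)]) (use w in measurable)
    then show "(\<lambda>(x, s). \<integral>\<^sup>+\<xi>. f x \<xi> s \<partial>\<Psi> \<omega>) \<in> borel_measurable (\<Phi> \<omega> \<Otimes>\<^sub>M lborel)"
      by (intro RM_meas_l[OF rm(1) w]) (simp add: split_beta')
  qed
  finally show ?thesis .
qed

lemma mtp:
  assumes rmP: "RM \<Phi>" and rmS: "RM \<Psi>"
    and Gm: "(\<lambda>p. G (fst p) (fst (snd p)) (snd (snd p))) \<in> borel_measurable (P \<Otimes>\<^sub>M (borel \<Otimes>\<^sub>M borel))"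
    and Ga: "\<And>s \<omega> x y. \<omega> \<in> space P \<Longrightarrow> G (\<theta> s \<omega>) x y = G \<omega> (x + s) (y + s)"
  shows "(\<integral>\<^sup>+\<omega>. \<integral>\<^sup>+x. indicator B1 x * (\<integral>\<^sup>+\<xi>. G \<omega> x \<xi> \<partial>\<Psi> \<omega>) \<partial>\<Phi> \<omega> \<partial>P)
       = (\<integral>\<^sup>+\<omega>. \<integral>\<^sup>+\<xi>. indicator B1 \<xi> * (\<integral>\<^sup>+x. G \<omega> x \<xi> \<partial>\<Phi> \<omega>) \<partial>\<Psi> \<omega> \<partial>P)"
proof -
  note Gc[measurable] = comp3[OF Gm]
  define L where "L = emeasure lborel (B1::'v set)"
  define I where "I \<omega> = (\<integral>\<^sup>+x. indicator B1 x * (\<integral>\<^sup>+\<xi>. G \<omega> x \<xi> \<partial>\<Psi> \<omega>) \<partial>\<Phi> \<omega>)" for \<omega>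
  define I' where "I' \<omega> = (\<integral>\<^sup>+\<xi>. indicator B1 \<xi> * (\<integral>\<^sup>+x. G \<omega> x \<xi> \<partial>\<Phi> \<omega>) \<partial>\<Psi> \<omega>)" for \<omega>
  define H where "H \<omega> s = (\<integral>\<^sup>+x. \<integral>\<^sup>+\<xi>. indicator B1 x * indicator B1 (\<xi> + s) * G \<omega> x \<xi> \<partial>\<Psi> \<omega> \<partial>\<Phi> \<omega>)" for \<omega> s
  define H' where "H' \<omega> s = (\<integral>\<^sup>+x. \<integral>\<^sup>+\<xi>. indicator B1 (x - s) * indicator B1 \<xi> * G \<omega> x \<xi> \<partial>\<Psi> \<omega> \<partial>\<Phi> \<omega>)" for \<omega> s
  have Gw[measurable]: "(\<lambda>p. G \<omega> (fst p) (snd p)) \<in> borel_measurable (borel \<Otimes>\<^sub>M borel)" if "\<omega> \<in> space P" for \<omega>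
    using that by measurable
  have Im: "I \<in> borel_measurable P"
  proof -
    have "(\<lambda>p. \<integral>\<^sup>+\<xi>. G (fst p) (snd p) \<xi> \<partial>\<Psi> (fst p)) \<in> borel_measurable (P \<Otimes>\<^sub>M borel)"
      by (rule RM_int_meas[OF rmS]) measurable
    note this[measurable]
    show ?thesis unfolding I_def by (rule RM_int_meas[OF rmP measurable_ident_sets[OF refl]]) measurable
  qed
  have I'm: "I' \<in> borel_measurable P"
  proof -
    have "(\<lambda>p. \<integral>\<^sup>+x. G (fst p) x (snd p) \<partial>\<Phi> (fst p)) \<in> borel_measurable (P \<Otimes>\<^sub>M borel)"
      by (rule RM_int_meas[OF rmP]) measurable
    note this[measurable]
    show ?thesis unfolding I'_def by (rule RM_int_meas[OF rmS measurable_ident_sets[OF refl]]) measurable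
  qed
  have Hm: "(\<lambda>p. H (fst p) (snd p)) \<in> borel_measurable (P \<Otimes>\<^sub>M lborel)"
  proof -
    have "(\<lambda>p. \<integral>\<^sup>+\<xi>. indicator B1 (snd p) * indicator B1 (\<xi> + snd (fst p)) * G (fst (fst p)) (snd p) \<xi> \<partial>\<Psi> (fst (fst p)))
       \<in> borel_measurable ((P \<Otimes>\<^sub>M lborel) \<Otimes>\<^sub>M borel)"
      by (rule RM_int_meas[OF rmS]) measurable
    note this[measurable]
    show ?thesis unfolding H_def by (rule RM_int_meas[OF rmP]) measurable
  qed
  have H'm: "(\<lambda>p. H' (fst p) (snd p)) \<in> borel_measurable (P \<Otimes>\<^sub>M lborel)"
  proof -
    have "(\<lambda>p. \<integral>\<^sup>+\<xi>. indicator B1 (snd p - snd (fst p)) * indicator B1 \<xi> * G (fst (fst p)) (snd p) \<xi> \<partial>\<Psi> (fst (fst p)))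
       \<in> borel_measurable ((P \<Otimes>\<^sub>M lborel) \<Otimes>\<^sub>M borel)"
      by (rule RM_int_meas[OF rmS]) measurable
    note this[measurable]
    show ?thesis unfolding H'_def by (rule RM_int_meas[OF rmP]) measurable
  qed
  have a: "L * I \<omega> = (\<integral>\<^sup>+s. H \<omega> s \<partial>lborel)" if w: "\<omega> \<in> space P" for \<omega>
  proof -
    have inner: "(\<lambda>x. \<integral>\<^sup>+\<xi>. G \<omega> x \<xi> \<partial>\<Psi> \<omega>) \<in> borel_measurable borel"
    proof -
      have "(\<lambda>x. \<integral>\<^sup>+\<xi>. G \<omega> x \<xi> \<partial>\<Psi> ((\<lambda>_. \<omega>) x)) \<in> borel_measurable borel"
        by (rule RM_int_meas[OF rmS]) (use w in measurable)
      then show ?thesis by simp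
    qed
    note inner[measurable]
    have "L * I \<omega> = (\<integral>\<^sup>+x. L * (indicator B1 x * (\<integral>\<^sup>+\<xi>. G \<omega> x \<xi> \<partial>\<Psi> \<omega>)) \<partial>\<Phi> \<omega>)"
      unfolding I_def by (rule nn_integral_cmult[symmetric]) (rule RM_meas1[OF rmP w], measurable)
    also have "\<dots> = (\<integral>\<^sup>+x. \<integral>\<^sup>+\<xi>. \<integral>\<^sup>+s. indicator B1 x * indicator B1 (\<xi> + s) * G \<omega> x \<xi> \<partial>lborel \<partial>\<Psi> \<omega> \<partial>\<Phi> \<omega>)"
    proof (rule nn_integral_cong)
      fix x
      have "L * (indicator B1 x * (\<integral>\<^sup>+\<xi>. G \<omega> x \<xi> \<partial>\<Psi> \<omega>)) = (\<integral>\<^sup>+\<xi>. L * indicator B1 x * G \<omega> x \<xi> \<partial>\<Psi> \<omega>)"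
        by (subst nn_integral_cmult) (use w in \<open>auto intro!: RM_meas1[OF rmS w] simp: mult.assoc\<close>)
      also have "\<dots> = (\<integral>\<^sup>+\<xi>. \<integral>\<^sup>+s. indicator B1 x * indicator B1 (\<xi> + s) * G \<omega> x \<xi> \<partial>lborel \<partial>\<Psi> \<omega>)"
      proof (rule nn_integral_cong)
        fix \<xi>
        have "(\<integral>\<^sup>+s. indicator B1 x * indicator B1 (\<xi> + s) * G \<omega> x \<xi> \<partial>lborel)
            = (\<integral>\<^sup>+s. indicator B1 (\<xi> + s) * (indicator B1 x * G \<omega> x \<xi>) \<partial>lborel)"
          by (simp add: ac_simps)
        also have "\<dots> = (\<integral>\<^sup>+s. indicator B1 (\<xi> + s) \<partial>lborel) * (indicator B1 x * G \<omega> x \<xi>)"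
          by (rule nn_integral_multc) measurable
        finally show "L * indicator B1 x * G \<omega> x \<xi> = (\<integral>\<^sup>+s. indicator B1 x * indicator B1 (\<xi> + s) * G \<omega> x \<xi> \<partial>lborel)"
          unfolding int_plus L_def by (simp add: ac_simps)
      qed
      finally show "L * (indicator B1 x * (\<integral>\<^sup>+\<xi>. G \<omega> x \<xi> \<partial>\<Psi> \<omega>)) = (\<integral>\<^sup>+\<xi>. \<integral>\<^sup>+s. indicator B1 x * indicator B1 (\<xi> + s) * G \<omega> x \<xi> \<partial>lborel \<partial>\<Psi> \<omega>)" .
    qed
    also have "\<dots> = (\<integral>\<^sup>+s. H \<omega> s \<partial>lborel)"
      unfolding H_def by (rule swap3[OF rmP rmS w]) (use w in measurable)
    finally show ?thesis .
  qed
  have d: "(\<integral>\<^sup>+s. H' \<omega> s \<partial>lborel) = L * I' \<omega>" if w: "\<omega> \<in> space P" for \<omega>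
  proof -
    have "(\<integral>\<^sup>+s. H' \<omega> s \<partial>lborel) = (\<integral>\<^sup>+x. \<integral>\<^sup>+\<xi>. \<integral>\<^sup>+s. indicator B1 (x - s) * indicator B1 \<xi> * G \<omega> x \<xi> \<partial>lborel \<partial>\<Psi> \<omega> \<partial>\<Phi> \<omega>)"
      unfolding H'_def by (rule swap3[OF rmP rmS w, symmetric]) (use w in measurable)
    also have "\<dots> = (\<integral>\<^sup>+x. \<integral>\<^sup>+\<xi>. L * (indicator B1 \<xi> * G \<omega> x \<xi>) \<partial>\<Psi> \<omega> \<partial>\<Phi> \<omega>)"
    proof (intro nn_integral_cong)
      fix x \<xi>
      have "(\<integral>\<^sup>+s. indicator B1 (x - s) * indicator B1 \<xi> * G \<omega> x \<xi> \<partial>lborel)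
          = (\<integral>\<^sup>+s. indicator B1 (x - s) * (indicator B1 \<xi> * G \<omega> x \<xi>) \<partial>lborel)"
        by (simp add: ac_simps)
      also have "\<dots> = (\<integral>\<^sup>+s. indicator B1 (x - s) \<partial>lborel) * (indicator B1 \<xi> * G \<omega> x \<xi>)"
        by (rule nn_integral_multc) measurable
      finally show "(\<integral>\<^sup>+s. indicator B1 (x - s) * indicator B1 \<xi> * G \<omega> x \<xi> \<partial>lborel) = L * (indicator B1 \<xi> * G \<omega> x \<xi>)"
        unfolding int_minus L_def by (simp add: ac_simps)
    qed
    also have "\<dots> = (\<integral>\<^sup>+\<xi>. \<integral>\<^sup>+x. L * (indicator B1 \<xi> * G \<omega> x \<xi>) \<partial>\<Phi> \<omega> \<partial>\<Psi> \<omega>)"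
    proof (rule Tonelli[OF RM_sf[OF rmS w] RM_sf[OF rmP w]])
      show "(\<lambda>(\<xi>, x). L * (indicator B1 \<xi> * G \<omega> x \<xi>)) \<in> borel_measurable (\<Psi> \<omega> \<Otimes>\<^sub>M \<Phi> \<omega>)"
        by (rule RM_meas_l[OF rmS w], rule RM_meas_r[OF rmP w]) (use w in measurable)
    qed
    also have "\<dots> = (\<integral>\<^sup>+\<xi>. L * (indicator B1 \<xi> * (\<integral>\<^sup>+x. G \<omega> x \<xi> \<partial>\<Phi> \<omega>)) \<partial>\<Psi> \<omega>)"
    proof (rule nn_integral_cong)
      fix \<xi>
      show "(\<integral>\<^sup>+x. L * (indicator B1 \<xi> * G \<omega> x \<xi>) \<partial>\<Phi> \<omega>) = L * (indicator B1 \<xi> * (\<integral>\<^sup>+x. G \<omega> x \<xi> \<partial>\<Phi> \<omega>))"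
      proof -
        have m: "(\<lambda>x. G \<omega> x \<xi>) \<in> borel_measurable (\<Phi> \<omega>)" by (rule RM_meas1[OF rmP w]) (use w in measurable)
        have "(\<integral>\<^sup>+x. L * (indicator B1 \<xi> * G \<omega> x \<xi>) \<partial>\<Phi> \<omega>) = (\<integral>\<^sup>+x. (L * indicator B1 \<xi>) * G \<omega> x \<xi> \<partial>\<Phi> \<omega>)"
          by (simp add: mult.assoc)
        also have "\<dots> = (L * indicator B1 \<xi>) * (\<integral>\<^sup>+x. G \<omega> x \<xi> \<partial>\<Phi> \<omega>)" by (rule nn_integral_cmult[OF m])
        finally show ?thesis by (simp add: mult.assoc)
      qed
    qed
    also have "\<dots> = L * I' \<omega>"
    proof -
      have inner: "(\<lambda>\<xi>. \<integral>\<^sup>+x. G \<omega> x \<xi> \<partial>\<Phi> \<omega>) \<in> borel_measurable borel"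
      proof -
        have "(\<lambda>\<xi>. \<integral>\<^sup>+x. G \<omega> x \<xi> \<partial>\<Phi> ((\<lambda>_. \<omega>) \<xi>)) \<in> borel_measurable borel"
          by (rule RM_int_meas[OF rmP]) (use w in measurable)
        then show ?thesis by simp
      qed
      note inner[measurable]
      show ?thesis unfolding I'_def
        by (rule nn_integral_cmult) (rule RM_meas1[OF rmS w], measurable)
    qed
    finally show ?thesis .
  qed
  have c: "(\<integral>\<^sup>+\<omega>. H \<omega> s \<partial>P) = (\<integral>\<^sup>+\<omega>. H' \<omega> s \<partial>P)" for s
  proof -
    have Hs: "(\<lambda>\<omega>. H \<omega> s) \<in> borel_measurable P"
    proof -
      have pm: "(\<lambda>\<omega>. (\<omega>, s)) \<in> measurable P (P \<Otimes>\<^sub>M lborel)" by measurable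
      from measurable_compose[OF pm Hm] show ?thesis by simp
    qed
    have "(\<integral>\<^sup>+\<omega>. H' \<omega> s \<partial>P) = (\<integral>\<^sup>+\<omega>. H (\<theta> s \<omega>) s \<partial>P)"
    proof (rule nn_integral_cong)
      fix \<omega> assume "\<omega> \<in> space P"
      then have w: "\<omega> \<in> space P" by simp
      have tw: "\<theta> s \<omega> \<in> space P" by (rule theta_space[OF w])
      have "H (\<theta> s \<omega>) s = (\<integral>\<^sup>+x. \<integral>\<^sup>+\<xi>. indicator B1 (x - s) * indicator B1 (\<xi> + s) * G (\<theta> s \<omega>) (x - s) \<xi> \<partial>\<Psi> (\<theta> s \<omega>) \<partial>\<Phi> \<omega>)"
        unfolding H_def
      proof (rule RM_shift[OF rmP w])
        have "(\<lambda>x. \<integral>\<^sup>+\<xi>. indicator B1 x * indicator B1 (\<xi> + s) * G (\<theta> s \<omega>) x \<xi> \<partial>\<Psi> ((\<lambda>_. \<theta> s \<omega>) x)) \<in> borel_measurable borel"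
          by (rule RM_int_meas[OF rmS]) (use tw in measurable)
        then show "(\<lambda>x. \<integral>\<^sup>+\<xi>. indicator B1 x * indicator B1 (\<xi> + s) * G (\<theta> s \<omega>) x \<xi> \<partial>\<Psi> (\<theta> s \<omega>)) \<in> borel_measurable borel"
          by simp
      qed
      also have "\<dots> = (\<integral>\<^sup>+x. \<integral>\<^sup>+\<xi>. indicator B1 (x - s) * indicator B1 (\<xi> - s + s) * G (\<theta> s \<omega>) (x - s) (\<xi> - s) \<partial>\<Psi> \<omega> \<partial>\<Phi> \<omega>)"
        by (intro nn_integral_cong RM_shift[OF rmS w]) (use tw in measurable)
      also have "\<dots> = H' \<omega> s"
        unfolding H'_def using Ga[OF w] by simp
      finally show "H' \<omega> s = H (\<theta> s \<omega>) s" by simp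
    qed
    also have "\<dots> = (\<integral>\<^sup>+\<omega>. H \<omega> s \<partial>P)" by (rule E_shift[OF Hs])
    finally show ?thesis by simp
  qed
  have "L * (\<integral>\<^sup>+\<omega>. I \<omega> \<partial>P) = (\<integral>\<^sup>+\<omega>. L * I \<omega> \<partial>P)"
    using Im by (rule nn_integral_cmult[symmetric])
  also have "\<dots> = (\<integral>\<^sup>+\<omega>. \<integral>\<^sup>+s. H \<omega> s \<partial>lborel \<partial>P)"
    by (rule nn_integral_cong) (simp add: a)
  also have "\<dots> = (\<integral>\<^sup>+s. \<integral>\<^sup>+\<omega>. H \<omega> s \<partial>P \<partial>lborel)"
    by (rule Tonelli[symmetric, OF sfP sf_lborel]) (use Hm in \<open>simp add: split_beta'\<close>)
  also have "\<dots> = (\<integral>\<^sup>+s. \<integral>\<^sup>+\<omega>. H' \<omega> s \<partial>P \<partial>lborel)" by (simp add: c)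
  also have "\<dots> = (\<integral>\<^sup>+\<omega>. \<integral>\<^sup>+s. H' \<omega> s \<partial>lborel \<partial>P)"
    by (rule Tonelli[OF sfP sf_lborel]) (use H'm in \<open>simp add: split_beta'\<close>)
  also have "\<dots> = (\<integral>\<^sup>+\<omega>. L * I' \<omega> \<partial>P)"
    by (rule nn_integral_cong) (simp add: d)
  also have "\<dots> = L * (\<integral>\<^sup>+\<omega>. I' \<omega> \<partial>P)"
    using I'm by (rule nn_integral_cmult)
  finally have "L * (\<integral>\<^sup>+\<omega>. I \<omega> \<partial>P) = L * (\<integral>\<^sup>+\<omega>. I' \<omega> \<partial>P)" .
  moreover have "L \<noteq> 0" "L \<noteq> \<top>" using L_pos[where 'v='v] L_fin[where 'v='v] unfolding L_def by auto
  ultimately show ?thesis unfolding I_def I'_def by (simp add: ennreal_mult_cancel_left)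
qed

end

context rsetup begin

lemma Z_inv:
  assumes rm: "RM \<Phi>"
    and km: "(\<lambda>p. k (fst p) (snd p)) \<in> borel_measurable (P \<Otimes>\<^sub>M borel)"
    and ka: "\<And>s \<omega> x. \<omega> \<in> space P \<Longrightarrow> k (\<theta> s \<omega>) x = k \<omega> (x + s)"
    and w: "\<omega> \<in> space P"
  shows "(\<integral>\<^sup>+x. k (\<theta> s \<omega>) x \<partial>\<Phi> (\<theta> s \<omega>)) = (\<integral>\<^sup>+x. k \<omega> x \<partial>\<Phi> \<omega>)"
proof -
  note kc[measurable] = comp2[OF km]
  have tw: "\<theta> s \<omega> \<in> space P" by (rule theta_space[OF w])
  have "(\<integral>\<^sup>+x. k (\<theta> s \<omega>) x \<partial>\<Phi> (\<theta> s \<omega>)) = (\<integral>\<^sup>+x. k (\<theta> s \<omega>) (x - s) \<partial>\<Phi> \<omega>)"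
    by (rule RM_shift[OF rm w]) (use tw in measurable)
  also have "\<dots> = (\<integral>\<^sup>+x. k \<omega> x \<partial>\<Phi> \<omega>)" using ka[OF w] by simp
  finally show ?thesis .
qed

lemma zero_inf:
  assumes rm: "RM \<Phi>"
    and km: "(\<lambda>p. k (fst p) (snd p)) \<in> borel_measurable (P \<Otimes>\<^sub>M borel)"
    and ka: "\<And>s \<omega> x. \<omega> \<in> space P \<Longrightarrow> k (\<theta> s \<omega>) x = k \<omega> (x + s)"
    and erg: "\<And>A. A \<in> sets P \<Longrightarrow> (\<forall>s. \<theta> s -` A \<inter> space P = A) \<Longrightarrow> emeasure P A = 0 \<or> emeasure P A = 1"
  shows "(\<integral>\<^sup>+\<omega>. \<integral>\<^sup>+x. indicator B1 x * k \<omega> x \<partial>\<Phi> \<omega> \<partial>P) = 0 \<Longrightarrow> AE \<omega> in P. (\<integral>\<^sup>+x. k \<omega> x \<partial>\<Phi> \<omega>) = 0"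
    and "(\<integral>\<^sup>+\<omega>. \<integral>\<^sup>+x. indicator B1 x * k \<omega> x \<partial>\<Phi> \<omega> \<partial>P) \<noteq> 0 \<Longrightarrow> AE \<omega> in P. (\<integral>\<^sup>+x. k \<omega> x \<partial>\<Phi> \<omega>) = \<infinity>"
proof -
  interpret prob_space P by (rule prob)
  note kc[measurable] = comp2[OF km]
  define c where "c = (\<integral>\<^sup>+\<omega>. \<integral>\<^sup>+x. indicator B1 x * k \<omega> x \<partial>\<Phi> \<omega> \<partial>P)"
  define Z where "Z \<omega> = (\<integral>\<^sup>+x. k \<omega> x \<partial>\<Phi> \<omega>)" for \<omega>
  define L where "L = emeasure lborel (B1::'v set)"
  have L: "L \<noteq> 0" "L \<noteq> \<top>" using L_pos[where 'v='v] L_fin[where 'v='v] unfolding L_def by auto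
  have Zm[measurable]: "Z \<in> borel_measurable P"
    unfolding Z_def by (rule RM_int_meas[OF rm measurable_ident_sets[OF refl]]) measurable
  have camp: "L * (\<integral>\<^sup>+\<omega>. Z \<omega> \<partial>P) = c * \<infinity>"
    using campbell1[OF rm km ka] unfolding L_def Z_def c_def by simp
  show "c = 0 \<Longrightarrow> AE \<omega> in P. Z \<omega> = 0" unfolding c_def[symmetric] Z_def[symmetric]
  proof -
    assume "c = 0"
    then have "L * (\<integral>\<^sup>+\<omega>. Z \<omega> \<partial>P) = 0" using camp by simp
    then have "(\<integral>\<^sup>+\<omega>. Z \<omega> \<partial>P) = 0" using L by simp
    then show "AE \<omega> in P. Z \<omega> = 0" using nn_integral_0_iff_AE[OF Zm] by simp
  qed
  show "c \<noteq> 0 \<Longrightarrow> AE \<omega> in P. Z \<omega> = \<infinity>" unfolding c_def[symmetric] Z_def[symmetric]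
  proof -
    assume c0: "c \<noteq> 0"
    define A where "A n = {\<omega> \<in> space P. Z \<omega> \<le> of_nat n}" for n :: nat
    have Am: "A n \<in> sets P" for n unfolding A_def by measurable
    have Ainv: "\<theta> s -` A n \<inter> space P = A n" for s n
      using Z_inv[OF rm km ka] theta_space unfolding A_def Z_def by auto
    have A0: "emeasure P (A n) = 0" for n
    proof (rule ccontr)
      assume "emeasure P (A n) \<noteq> 0"
      then have "emeasure P (A n) = 1" using erg[OF Am] Ainv by blast
      then have "AE \<omega> in P. \<omega> \<in> A n"
        using AE_in_set_eq_1[OF Am] by (simp add: emeasure_eq_measure)
      then have "AE \<omega> in P. Z \<omega> \<le> of_nat n" by (auto simp: A_def)
      then have "(\<integral>\<^sup>+\<omega>. Z \<omega> \<partial>P) \<le> (\<integral>\<^sup>+\<omega>. of_nat n \<partial>P)" by (rule nn_integral_mono_AE)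
      also have "\<dots> = of_nat n" by (simp add: emeasure_space_1)
      finally have "L * (\<integral>\<^sup>+\<omega>. Z \<omega> \<partial>P) \<le> L * of_nat n" by (rule mult_left_mono) simp
      also have "\<dots> < \<infinity>" using L by (simp add: ennreal_mult_less_top of_nat_less_top less_top)
      finally have "c * \<infinity> < \<infinity>" using camp by simp
      then show False using c0 by (simp add: ennreal_mult_eq_top_iff)
    qed
    have N: "(\<Union>n. A n) \<in> null_sets P" using A0 Am by (intro null_sets_UN) (simp add: null_sets_def)
    show "AE \<omega> in P. Z \<omega> = \<infinity>"
    proof (rule AE_I'[OF N])
      show "{\<omega> \<in> space P. \<not> Z \<omega> = \<infinity>} \<subseteq> (\<Union>n. A n)"
      proof
        fix \<omega> assume "\<omega> \<in> {\<omega> \<in> space P. \<not> Z \<omega> = \<infinity>}"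
        then have w: "\<omega> \<in> space P" and "Z \<omega> < \<infinity>" by (auto simp: less_top)
        then obtain n where "Z \<omega> < of_nat n" using ennreal_Ex_less_of_nat[of "Z \<omega>"] by auto
        then show "\<omega> \<in> (\<Union>n. A n)" using w by (auto simp: A_def intro!: exI[of _ n])
      qed
    qed
  qed
qed

end

lemma gen_A:
  fixes \<mu> :: "'v::euclidean_space measure"
  assumes s: "sets \<mu> = sets borel" and hm: "h \<in> borel_measurable borel" and h1: "\<And>x. h x \<le> 1"
    and z: "(\<integral>\<^sup>+x. 1 - h x \<partial>\<mu>) = 0"
  shows "AE x in \<mu>. h x = 1"
proof -
  have "(\<lambda>x. 1 - h x) \<in> borel_measurable \<mu>"
    unfolding measurable_cong_sets[OF s refl] using hm by measurable
  then have "AE x in \<mu>. 1 - h x = 0" using z nn_integral_0_iff_AE by blast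
  then show ?thesis
  proof (rule AE_mp[OF _ AE_I2], intro impI)
    fix x assume "1 - h x = 0"
    then have "1 \<le> h x" by (simp add: diff_eq_0_iff_ennreal)
    then show "h x = 1" using h1[of x] by simp
  qed
qed

lemma gen_B:
  fixes \<mu> :: "'v::euclidean_space measure"
  assumes s: "sets \<mu> = sets borel" and hm: "h \<in> borel_measurable borel" and h1: "\<And>x. h x \<le> 1"
    and z: "(\<integral>\<^sup>+x. 1 - h x \<partial>\<mu>) = \<infinity>"
  shows "{x \<in> supp \<mu>. h x \<noteq> 1} \<in> sets \<mu>" "emeasure \<mu> {x \<in> supp \<mu>. h x \<noteq> 1} = \<infinity>"
proof -
  have cl: "supp \<mu> \<in> sets borel" using supp_closed[OF s] by (simp add: borel_closed)
  have U'm: "{x. h x \<noteq> 1} \<in> sets borel" using hm by measurable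
  have eq: "{x \<in> supp \<mu>. h x \<noteq> 1} = supp \<mu> \<inter> {x. h x \<noteq> 1}" by auto
  have Um': "{x \<in> supp \<mu>. h x \<noteq> 1} \<in> sets borel" unfolding eq by (rule sets.Int[OF cl U'm])
  show Um: "{x \<in> supp \<mu>. h x \<noteq> 1} \<in> sets \<mu>" using Um' by (simp only: s)
  have ncl: "- supp \<mu> \<in> sets borel" by (intro borel_open open_Compl supp_closed[OF s])
  have "(\<integral>\<^sup>+x. 1 - h x \<partial>\<mu>) \<le> (\<integral>\<^sup>+x. indicator {x. h x \<noteq> 1} x \<partial>\<mu>)"
  proof (rule nn_integral_mono)
    fix x show "1 - h x \<le> indicator {x. h x \<noteq> 1} x"
      by (cases "h x = 1") (auto simp: diff_le_self_ennreal)
  qed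
  also have "\<dots> = emeasure \<mu> {x. h x \<noteq> 1}" using U'm by (intro nn_integral_indicator) (simp only: s)
  also have "\<dots> \<le> emeasure \<mu> ({x \<in> supp \<mu>. h x \<noteq> 1} \<union> (- supp \<mu>))"
  proof (rule emeasure_mono)
    show "{x. h x \<noteq> 1} \<subseteq> {x \<in> supp \<mu>. h x \<noteq> 1} \<union> - supp \<mu>" by blast
    have "{x \<in> supp \<mu>. h x \<noteq> 1} \<union> - supp \<mu> \<in> sets borel" by (rule sets.Un[OF Um' ncl])
    then show "{x \<in> supp \<mu>. h x \<noteq> 1} \<union> - supp \<mu> \<in> sets \<mu>" by (simp only: s)
  qed
  also have "\<dots> \<le> emeasure \<mu> {x \<in> supp \<mu>. h x \<noteq> 1} + emeasure \<mu> (- supp \<mu>)"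
    by (rule emeasure_subadditive[OF Um]) (use ncl in \<open>simp only: s\<close>)
  also have "\<dots> = emeasure \<mu> {x \<in> supp \<mu>. h x \<noteq> 1}" using supp_null[OF s] by simp
  finally show "emeasure \<mu> {x \<in> supp \<mu>. h x \<noteq> 1} = \<infinity>" using z by (simp add: top_unique)
qed

lemma gen_C:
  fixes \<nu> :: "'v::euclidean_space measure"
  assumes S: "S \<in> sets \<nu>" "emeasure \<nu> S = \<infinity>" and g: "\<And>\<xi>. \<xi> \<in> S \<Longrightarrow> 1 \<le> g \<xi>"
  shows "(\<integral>\<^sup>+\<xi>. ennreal (g \<xi>) \<partial>\<nu>) = \<infinity>"
proof -
  have "emeasure \<nu> S = (\<integral>\<^sup>+\<xi>. indicator S \<xi> \<partial>\<nu>)" using S by simp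
  also have "\<dots> \<le> (\<integral>\<^sup>+\<xi>. ennreal (g \<xi>) \<partial>\<nu>)"
    by (rule nn_integral_mono) (auto split: split_indicator dest: g)
  finally show ?thesis using S by (simp add: top_unique)
qed

lemma ennreal_mult_strict_aux:
  fixes L :: ennreal
  assumes "0 \<le> a" "a < b" "L \<noteq> 0" "L < \<top>"
  shows "ennreal a * L < ennreal b * L"
proof -
  obtain r where r: "L = ennreal r" "0 \<le> r" using assms(4) by (cases L) auto
  then have "r > 0" using assms(3) by (auto simp: less_le)
  then have "a * r < b * r" using assms(2) by simp
  moreover have "ennreal a * L = ennreal (a * r)" "ennreal b * L = ennreal (b * r)"
    using r assms(1,2) by (simp_all add: ennreal_mult)
  ultimately show ?thesis using assms(1) r by (simp add: ennreal_less_iff)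
qed

lemma stable_C:
  assumes "stable \<phi> \<psi> f" "x0 \<in> supp \<phi>" "\<not> exhausted \<psi> f x0" "\<xi>0 \<in> supp \<psi>" "\<not> sated \<phi> f \<xi>0"
  shows "1 \<le> f x0 \<xi>0"
proof (rule ccontr)
  assume "\<not> 1 \<le> f x0 \<xi>0"
  then have "f x0 \<xi>0 < 1" by simp
  then have "site_desires \<psi> f x0 \<xi>0" "center_desires \<phi> f \<xi>0 x0"
    using assms(3,5) unfolding site_desires_def center_desires_def by auto
  then show False using assms(1,2,4) unfolding stable_def by blast
qed

theorem mainTheorem7:
  fixes P :: "'w measure"
    and \<theta> :: "'v::euclidean_space \<Rightarrow> 'w \<Rightarrow> 'w"
    and \<Phi> \<Psi> :: "'w \<Rightarrow> 'v measure"
    and F :: "'w \<Rightarrow> 'v \<Rightarrow> 'v \<Rightarrow> real"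
    and l\<Phi> l\<Psi> :: real
  assumes erg\<Phi>: "ergodic_rm P \<theta> \<Phi>"
    and erg\<Psi>: "ergodic_rm P \<theta> \<Psi>"
    and int\<Phi>: "has_intensity P \<Phi> l\<Phi>" and pos\<Phi>: "0 < l\<Phi>"
    and int\<Psi>: "has_intensity P \<Psi> l\<Psi>" and pos\<Psi>: "0 < l\<Psi>"
    and Fmeas: "(\<lambda>(\<omega>, x, y). F \<omega> x y) \<in> borel_measurable (P \<Otimes>\<^sub>M lborel \<Otimes>\<^sub>M lborel)"
    and Fnonneg: "\<forall>\<omega> x y. 0 \<le> F \<omega> x y"
    and Fadapt: "flow_adapted_fun P \<theta> F"
    and Fstable: "AE \<omega> in P. constrained_density (\<Phi> \<omega>) (\<Psi> \<omega>) (F \<omega>) \<and> stable (\<Phi> \<omega>) (\<Psi> \<omega>) (F \<omega>)"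
  shows "(l\<Phi> = l\<Psi> \<longrightarrow>
            (AE \<omega> in P. (AE x in \<Phi> \<omega>. exhausted (\<Psi> \<omega>) (F \<omega>) x) \<and>
                         (AE \<xi> in \<Psi> \<omega>. sated (\<Phi> \<omega>) (F \<omega>) \<xi>)))
       \<and> (l\<Phi> < l\<Psi> \<longrightarrow>
            (AE \<omega> in P. (\<forall>x\<in>supp (\<Phi> \<omega>). exhausted (\<Psi> \<omega>) (F \<omega>) x) \<and>
                         {\<xi>\<in>supp (\<Psi> \<omega>). \<not> sated (\<Phi> \<omega>) (F \<omega>) \<xi>} \<in> sets (\<Psi> \<omega>) \<and>
                         emeasure (\<Psi> \<omega>) {\<xi>\<in>supp (\<Psi> \<omega>). \<not> sated (\<Phi> \<omega>) (F \<omega>) \<xi>} = \<infinity>))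
       \<and> (l\<Phi> > l\<Psi> \<longrightarrow>
            (AE \<omega> in P. (\<forall>\<xi>\<in>supp (\<Psi> \<omega>). sated (\<Phi> \<omega>) (F \<omega>) \<xi>) \<and>
                         {x\<in>supp (\<Phi> \<omega>). \<not> exhausted (\<Psi> \<omega>) (F \<omega>) x} \<in> sets (\<Phi> \<omega>) \<and>
                         emeasure (\<Phi> \<omega>) {x\<in>supp (\<Phi> \<omega>). \<not> exhausted (\<Psi> \<omega>) (F \<omega>) x} = \<infinity>))"
proof -
  have stP: "stationary_rm P \<theta> \<Phi>" and ergP: "\<And>A. A \<in> sets P \<Longrightarrow> (\<forall>s. \<theta> s -` A \<inter> space P = A) \<Longrightarrow> emeasure P A = 0 \<or> emeasure P A = 1"
    using erg\<Phi> unfolding ergodic_rm_def by blast+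
  have stS: "stationary_rm P \<theta> \<Psi>" using erg\<Psi> unfolding ergodic_rm_def by blast
  have prob: "prob_space P" and fl: "measurable_flow P \<theta>"
    and inv: "\<And>s A. A \<in> sets P \<Longrightarrow> emeasure P (\<theta> s -` A \<inter> space P) = emeasure P A"
    using stP unfolding stationary_rm_def by blast+
  interpret rsetup P \<theta> by (rule rsetup.intro[OF prob fl inv])
  interpret prob_space P by (rule prob)
  have rmP: "RM \<Phi>" using stP unfolding stationary_rm_def RM_def by blast
  have rmS: "RM \<Psi>" using stS unfolding stationary_rm_def RM_def by blast
  define L where "L = emeasure lborel (B1::'v set)"
  have L: "L \<noteq> 0" "L < \<infinity>" using L_pos[where 'v='v] L_fin[where 'v='v] unfolding L_def by auto
  define G where "G \<omega> x y = ennreal (F \<omega> x y)" for \<omega> x y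
  have Fm: "(\<lambda>p. F (fst p) (fst (snd p)) (snd (snd p))) \<in> borel_measurable (P \<Otimes>\<^sub>M (borel \<Otimes>\<^sub>M borel))"
  proof -
    have "(\<lambda>p. F (fst p) (fst (snd p)) (snd (snd p))) \<in> borel_measurable (P \<Otimes>\<^sub>M (lborel \<Otimes>\<^sub>M lborel))"
      using Fmeas by (simp add: split_beta')
    then show ?thesis
      by (simp add: measurable_cong_sets[OF sets_pair_measure_cong[OF refl sets_pair_measure_cong[OF sets_lborel sets_lborel]] refl])
  qed
  note Fc[measurable] = comp3[OF Fm]
  have Gm: "(\<lambda>p. G (fst p) (fst (snd p)) (snd (snd p))) \<in> borel_measurable (P \<Otimes>\<^sub>M (borel \<Otimes>\<^sub>M borel))"
    unfolding G_def by measurable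
  note Gc[measurable] = comp3[OF Gm]
  have Ga: "G (\<theta> s \<omega>) x y = G \<omega> (x + s) (y + s)" if "\<omega> \<in> space P" for s \<omega> x y
    using Fadapt that unfolding flow_adapted_fun_def G_def by auto
  define hP where "hP \<omega> x = (\<integral>\<^sup>+\<xi>. G \<omega> x \<xi> \<partial>\<Psi> \<omega>)" for \<omega> x
  define hS where "hS \<omega> \<xi> = (\<integral>\<^sup>+x. G \<omega> x \<xi> \<partial>\<Phi> \<omega>)" for \<omega> \<xi>
  have hPm: "(\<lambda>p. hP (fst p) (snd p)) \<in> borel_measurable (P \<Otimes>\<^sub>M borel)"
    unfolding hP_def by (rule RM_int_meas[OF rmS]) measurable
  have hSm: "(\<lambda>p. hS (fst p) (snd p)) \<in> borel_measurable (P \<Otimes>\<^sub>M borel)"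
    unfolding hS_def by (rule RM_int_meas[OF rmP]) measurable
  note hPc[measurable] = comp2[OF hPm] and hSc[measurable] = comp2[OF hSm]
  have hPw: "hP \<omega> \<in> borel_measurable borel" if "\<omega> \<in> space P" for \<omega> using that by measurable
  have hSw: "hS \<omega> \<in> borel_measurable borel" if "\<omega> \<in> space P" for \<omega> using that by measurable
  have hPa: "hP (\<theta> s \<omega>) x = hP \<omega> (x + s)" if w: "\<omega> \<in> space P" for s \<omega> x
  proof -
    have tw: "\<theta> s \<omega> \<in> space P" by (rule theta_space[OF w])
    have "hP (\<theta> s \<omega>) x = (\<integral>\<^sup>+\<xi>. G (\<theta> s \<omega>) x (\<xi> - s) \<partial>\<Psi> \<omega>)"
      unfolding hP_def by (rule RM_shift[OF rmS w]) (use tw in measurable)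
    also have "\<dots> = hP \<omega> (x + s)" unfolding hP_def using Ga[OF w] by simp
    finally show ?thesis .
  qed
  have hSa: "hS (\<theta> s \<omega>) \<xi> = hS \<omega> (\<xi> + s)" if w: "\<omega> \<in> space P" for s \<omega> \<xi>
  proof -
    have tw: "\<theta> s \<omega> \<in> space P" by (rule theta_space[OF w])
    have "hS (\<theta> s \<omega>) \<xi> = (\<integral>\<^sup>+x. G (\<theta> s \<omega>) (x - s) \<xi> \<partial>\<Phi> \<omega>)"
      unfolding hS_def by (rule RM_shift[OF rmP w]) (use tw in measurable)
    also have "\<dots> = hS \<omega> (\<xi> + s)" unfolding hS_def using Ga[OF w] by simp
    finally show ?thesis .
  qed
  have kPm: "(\<lambda>p. 1 - hP (fst p) (snd p)) \<in> borel_measurable (P \<Otimes>\<^sub>M borel)" by measurable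
  have kSm: "(\<lambda>p. 1 - hS (fst p) (snd p)) \<in> borel_measurable (P \<Otimes>\<^sub>M borel)" by measurable
  have kPa: "1 - hP (\<theta> s \<omega>) x = 1 - hP \<omega> (x + s)" if "\<omega> \<in> space P" for s \<omega> x using hPa[OF that] by simp
  have kSa: "1 - hS (\<theta> s \<omega>) x = 1 - hS \<omega> (x + s)" if "\<omega> \<in> space P" for s \<omega> x using hSa[OF that] by simp
  have exh: "exhausted (\<Psi> \<omega>) (F \<omega>) x \<longleftrightarrow> hP \<omega> x = 1" for \<omega> x
    unfolding exhausted_def hP_def G_def ..
  have sat: "sated (\<Phi> \<omega>) (F \<omega>) \<xi> \<longleftrightarrow> hS \<omega> \<xi> = 1" for \<omega> \<xi>
    unfolding sated_def hS_def G_def ..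
  define good where "good \<omega> \<longleftrightarrow> \<omega> \<in> space P \<and> constrained_density (\<Phi> \<omega>) (\<Psi> \<omega>) (F \<omega>) \<and> stable (\<Phi> \<omega>) (\<Psi> \<omega>) (F \<omega>)" for \<omega>
  have AEgood: "AE \<omega> in P. good \<omega>" using Fstable unfolding good_def by (auto elim: AE_mp)
  have gP1: "hP \<omega> x \<le> 1" if "good \<omega>" for \<omega> x
    using that unfolding good_def constrained_density_def hP_def G_def by auto
  have gS1: "hS \<omega> \<xi> \<le> 1" if "good \<omega>" for \<omega> \<xi>
    using that unfolding good_def constrained_density_def hS_def G_def by auto
  define aP where "aP = (\<integral>\<^sup>+\<omega>. \<integral>\<^sup>+x. indicator B1 x * (1 - hP \<omega> x) \<partial>\<Phi> \<omega> \<partial>P)"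
  define aS where "aS = (\<integral>\<^sup>+\<omega>. \<integral>\<^sup>+x. indicator B1 x * (1 - hS \<omega> x) \<partial>\<Psi> \<omega> \<partial>P)"
  define m where "m = (\<integral>\<^sup>+\<omega>. \<integral>\<^sup>+x. indicator B1 x * hP \<omega> x \<partial>\<Phi> \<omega> \<partial>P)"
  define m' where "m' = (\<integral>\<^sup>+\<omega>. \<integral>\<^sup>+x. indicator B1 x * hS \<omega> x \<partial>\<Psi> \<omega> \<partial>P)"
  have mm: "m = m'" unfolding m_def m'_def hP_def hS_def by (rule mtp[OF rmP rmS Gm Ga])
  have balance: "(\<integral>\<^sup>+\<omega>. \<integral>\<^sup>+x. indicator B1 x * (1 - h \<omega> x) \<partial>\<Lambda> \<omega> \<partial>P) + (\<integral>\<^sup>+\<omega>. \<integral>\<^sup>+x. indicator B1 x * h \<omega> x \<partial>\<Lambda> \<omega> \<partial>P)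
      = ennreal l * L"
    if rm: "RM \<Lambda>" and hm: "(\<lambda>p. h (fst p) (snd p)) \<in> borel_measurable (P \<Otimes>\<^sub>M borel)"
      and h1: "\<And>\<omega> x. good \<omega> \<Longrightarrow> h \<omega> x \<le> 1" and int: "has_intensity P \<Lambda> l" for \<Lambda> h l
  proof -
    note hc[measurable] = comp2[OF hm]
    have m1: "(\<lambda>\<omega>. \<integral>\<^sup>+x. indicator B1 x * (1 - h \<omega> x) \<partial>\<Lambda> \<omega>) \<in> borel_measurable P"
      by (rule RM_int_meas[OF rm measurable_ident_sets[OF refl]]) measurable
    have m2: "(\<lambda>\<omega>. \<integral>\<^sup>+x. indicator B1 x * h \<omega> x \<partial>\<Lambda> \<omega>) \<in> borel_measurable P"
      by (rule RM_int_meas[OF rm measurable_ident_sets[OF refl]]) measurable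
    have "(\<integral>\<^sup>+\<omega>. \<integral>\<^sup>+x. indicator B1 x * (1 - h \<omega> x) \<partial>\<Lambda> \<omega> \<partial>P) + (\<integral>\<^sup>+\<omega>. \<integral>\<^sup>+x. indicator B1 x * h \<omega> x \<partial>\<Lambda> \<omega> \<partial>P)
      = (\<integral>\<^sup>+\<omega>. (\<integral>\<^sup>+x. indicator B1 x * (1 - h \<omega> x) \<partial>\<Lambda> \<omega>) + (\<integral>\<^sup>+x. indicator B1 x * h \<omega> x \<partial>\<Lambda> \<omega>) \<partial>P)"
      by (rule nn_integral_add[symmetric, OF m1 m2])
    also have "\<dots> = (\<integral>\<^sup>+\<omega>. emeasure (\<Lambda> \<omega>) B1 \<partial>P)"
    proof (rule nn_integral_cong_AE)
      show "AE \<omega> in P. (\<integral>\<^sup>+x. indicator B1 x * (1 - h \<omega> x) \<partial>\<Lambda> \<omega>) + (\<integral>\<^sup>+x. indicator B1 x * h \<omega> x \<partial>\<Lambda> \<omega>) = emeasure (\<Lambda> \<omega>) B1"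
        using AEgood
      proof (rule AE_mp[OF _ AE_I2], intro impI)
        fix \<omega> assume g: "good \<omega>"
        then have w: "\<omega> \<in> space P" by (simp add: good_def)
        have "(\<integral>\<^sup>+x. indicator B1 x * (1 - h \<omega> x) \<partial>\<Lambda> \<omega>) + (\<integral>\<^sup>+x. indicator B1 x * h \<omega> x \<partial>\<Lambda> \<omega>)
            = (\<integral>\<^sup>+x. indicator B1 x * (1 - h \<omega> x) + indicator B1 x * h \<omega> x \<partial>\<Lambda> \<omega>)"
          by (rule nn_integral_add[symmetric]) (rule RM_meas1[OF rm w], use w in measurable)+
        also have "\<dots> = (\<integral>\<^sup>+x. indicator B1 x \<partial>\<Lambda> \<omega>)"
        proof (rule nn_integral_cong)
          fix x
          have "(1 - h \<omega> x) + h \<omega> x = 1" using h1[OF g, of x] by (simp add: diff_add_cancel_ennreal)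
          then show "indicator B1 x * (1 - h \<omega> x) + indicator B1 x * h \<omega> x = indicator B1 x"
            by (simp add: distrib_left[symmetric])
        qed
        also have "\<dots> = emeasure (\<Lambda> \<omega>) B1"
          by (rule nn_integral_indicator) (simp add: RM_sets[OF rm w])
        finally show "(\<integral>\<^sup>+x. indicator B1 x * (1 - h \<omega> x) \<partial>\<Lambda> \<omega>) + (\<integral>\<^sup>+x. indicator B1 x * h \<omega> x \<partial>\<Lambda> \<omega>) = emeasure (\<Lambda> \<omega>) B1" .
      qed
    qed
    also have "\<dots> = ennreal l * L" using int unfolding has_intensity_def L_def by simp
    finally show ?thesis .
  qed
  have balP: "aP + m = ennreal l\<Phi> * L" unfolding aP_def m_def
    by (rule balance[OF rmP hPm gP1 int\<Phi>])
  have balS: "aS + m = ennreal l\<Psi> * L" unfolding aS_def mm m'_def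
    by (rule balance[OF rmS hSm gS1 int\<Psi>])
  have finP: "ennreal l\<Phi> * L < \<infinity>" and finS: "ennreal l\<Psi> * L < \<infinity>" using L by (auto simp: ennreal_mult_less_top)
  have mfin: "m < \<infinity>" using balP finP by (metis add.commute le_iff_add le_less_trans)
  define ZP where "ZP \<omega> = (\<integral>\<^sup>+x. 1 - hP \<omega> x \<partial>\<Phi> \<omega>)" for \<omega>
  define ZS where "ZS \<omega> = (\<integral>\<^sup>+x. 1 - hS \<omega> x \<partial>\<Psi> \<omega>)" for \<omega>
  have ZP0: "aP = 0 \<Longrightarrow> AE \<omega> in P. ZP \<omega> = 0" unfolding aP_def ZP_def by (rule zero_inf(1)[OF rmP kPm kPa ergP])
  have ZPi: "aP \<noteq> 0 \<Longrightarrow> AE \<omega> in P. ZP \<omega> = \<infinity>" unfolding aP_def ZP_def by (rule zero_inf(2)[OF rmP kPm kPa ergP])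
  have ZS0: "aS = 0 \<Longrightarrow> AE \<omega> in P. ZS \<omega> = 0" unfolding aS_def ZS_def by (rule zero_inf(1)[OF rmS kSm kSa ergP])
  have ZSi: "aS \<noteq> 0 \<Longrightarrow> AE \<omega> in P. ZS \<omega> = \<infinity>" unfolding aS_def ZS_def by (rule zero_inf(2)[OF rmS kSm kSa ergP])
  have A_P: "AE x in \<Phi> \<omega>. exhausted (\<Psi> \<omega>) (F \<omega>) x" if "good \<omega>" "ZP \<omega> = 0" for \<omega>
  proof -
    have w: "\<omega> \<in> space P" using that by (simp add: good_def)
    show ?thesis unfolding exh
      by (rule gen_A[OF RM_sets[OF rmP w] hPw[OF w] gP1[OF that(1)]]) (use that in \<open>simp add: ZP_def\<close>)
  qed
  have A_S: "AE \<xi> in \<Psi> \<omega>. sated (\<Phi> \<omega>) (F \<omega>) \<xi>" if "good \<omega>" "ZS \<omega> = 0" for \<omega>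
  proof -
    have w: "\<omega> \<in> space P" using that by (simp add: good_def)
    show ?thesis unfolding sat
      by (rule gen_A[OF RM_sets[OF rmS w] hSw[OF w] gS1[OF that(1)]]) (use that in \<open>simp add: ZS_def\<close>)
  qed
  have B_P: "{x\<in>supp (\<Phi> \<omega>). \<not> exhausted (\<Psi> \<omega>) (F \<omega>) x} \<in> sets (\<Phi> \<omega>) \<and>
             emeasure (\<Phi> \<omega>) {x\<in>supp (\<Phi> \<omega>). \<not> exhausted (\<Psi> \<omega>) (F \<omega>) x} = \<infinity>" if "good \<omega>" "ZP \<omega> = \<infinity>" for \<omega>
  proof -
    have w: "\<omega> \<in> space P" using that by (simp add: good_def)
    have z: "(\<integral>\<^sup>+x. 1 - hP \<omega> x \<partial>\<Phi> \<omega>) = \<infinity>" using that by (simp add: ZP_def)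
    show ?thesis unfolding exh
      using gen_B[OF RM_sets[OF rmP w] hPw[OF w] gP1[OF that(1)] z] by simp
  qed
  have B_S: "{\<xi>\<in>supp (\<Psi> \<omega>). \<not> sated (\<Phi> \<omega>) (F \<omega>) \<xi>} \<in> sets (\<Psi> \<omega>) \<and>
             emeasure (\<Psi> \<omega>) {\<xi>\<in>supp (\<Psi> \<omega>). \<not> sated (\<Phi> \<omega>) (F \<omega>) \<xi>} = \<infinity>" if "good \<omega>" "ZS \<omega> = \<infinity>" for \<omega>
  proof -
    have w: "\<omega> \<in> space P" using that by (simp add: good_def)
    have z: "(\<integral>\<^sup>+x. 1 - hS \<omega> x \<partial>\<Psi> \<omega>) = \<infinity>" using that by (simp add: ZS_def)
    show ?thesis unfolding sat
      using gen_B[OF RM_sets[OF rmS w] hSw[OF w] gS1[OF that(1)] z] by simp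
  qed
  have C_P: "\<forall>x\<in>supp (\<Phi> \<omega>). exhausted (\<Psi> \<omega>) (F \<omega>) x" if g: "good \<omega>" and
      S: "{\<xi>\<in>supp (\<Psi> \<omega>). \<not> sated (\<Phi> \<omega>) (F \<omega>) \<xi>} \<in> sets (\<Psi> \<omega>)"
         "emeasure (\<Psi> \<omega>) {\<xi>\<in>supp (\<Psi> \<omega>). \<not> sated (\<Phi> \<omega>) (F \<omega>) \<xi>} = \<infinity>" for \<omega>
  proof (rule ballI, rule ccontr)
    fix x0 assume x0: "x0 \<in> supp (\<Phi> \<omega>)" "\<not> exhausted (\<Psi> \<omega>) (F \<omega>) x0"
    have st: "stable (\<Phi> \<omega>) (\<Psi> \<omega>) (F \<omega>)" using g by (simp add: good_def)
    have "(\<integral>\<^sup>+\<xi>. ennreal (F \<omega> x0 \<xi>) \<partial>\<Psi> \<omega>) = \<infinity>"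
      by (rule gen_C[OF S]) (use stable_C[OF st x0] in auto)
    moreover have "(\<integral>\<^sup>+\<xi>. ennreal (F \<omega> x0 \<xi>) \<partial>\<Psi> \<omega>) \<le> 1"
      using g unfolding good_def constrained_density_def by auto
    ultimately show False by (simp add: top_unique)
  qed
  have C_S: "\<forall>\<xi>\<in>supp (\<Psi> \<omega>). sated (\<Phi> \<omega>) (F \<omega>) \<xi>" if g: "good \<omega>" and
      S: "{x\<in>supp (\<Phi> \<omega>). \<not> exhausted (\<Psi> \<omega>) (F \<omega>) x} \<in> sets (\<Phi> \<omega>)"
         "emeasure (\<Phi> \<omega>) {x\<in>supp (\<Phi> \<omega>). \<not> exhausted (\<Psi> \<omega>) (F \<omega>) x} = \<infinity>" for \<omega>
  proof (rule ballI, rule ccontr)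
    fix \<xi>0 assume \<xi>0: "\<xi>0 \<in> supp (\<Psi> \<omega>)" "\<not> sated (\<Phi> \<omega>) (F \<omega>) \<xi>0"
    have st: "stable (\<Phi> \<omega>) (\<Psi> \<omega>) (F \<omega>)" using g by (simp add: good_def)
    have "(\<integral>\<^sup>+x. ennreal (F \<omega> x \<xi>0) \<partial>\<Phi> \<omega>) = \<infinity>"
      by (rule gen_C[OF S]) (use stable_C[OF st _ _ \<xi>0] in auto)
    moreover have "(\<integral>\<^sup>+x. ennreal (F \<omega> x \<xi>0) \<partial>\<Phi> \<omega>) \<le> 1"
      using g unfolding good_def constrained_density_def by auto
    ultimately show False by (simp add: top_unique)
  qed
  have both_inf: False if "AE \<omega> in P. ZP \<omega> = \<infinity>" "AE \<omega> in P. ZS \<omega> = \<infinity>"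
  proof -
    have "AE \<omega> in P. False"
      using AEgood that(1) that(2)
    proof (eventually_elim)
      case (elim \<omega>)
      have S: "{\<xi>\<in>supp (\<Psi> \<omega>). \<not> sated (\<Phi> \<omega>) (F \<omega>) \<xi>} \<in> sets (\<Psi> \<omega>)"
         "emeasure (\<Psi> \<omega>) {\<xi>\<in>supp (\<Psi> \<omega>). \<not> sated (\<Phi> \<omega>) (F \<omega>) \<xi>} = \<infinity>"
        using B_S[OF elim(1) elim(3)] by auto
      have allx: "\<forall>x\<in>supp (\<Phi> \<omega>). exhausted (\<Psi> \<omega>) (F \<omega>) x" by (rule C_P[OF elim(1) S])
      have "emeasure (\<Phi> \<omega>) {x\<in>supp (\<Phi> \<omega>). \<not> exhausted (\<Psi> \<omega>) (F \<omega>) x} = \<infinity>"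
        using B_P[OF elim(1) elim(2)] by auto
      moreover have "{x\<in>supp (\<Phi> \<omega>). \<not> exhausted (\<Psi> \<omega>) (F \<omega>) x} = {}" using allx by auto
      ultimately show False by simp
    qed
    then show False by simp
  qed
  show ?thesis
  proof (intro conjI impI)
    assume eq: "l\<Phi> = l\<Psi>"
    have "aP + m = aS + m" using balP balS eq by simp
    then have "m + aP = m + aS" by (simp add: add.commute)
    then have "m = \<top> \<or> aP = aS" by (simp add: ennreal_add_left_cancel)
    then have aPS: "aP = aS" using mfin by auto
    have aP0: "aP = 0"
    proof (rule ccontr)
      assume "aP \<noteq> 0"
      then show False using both_inf[OF ZPi ZSi] aPS by simp
    qed
    show "AE \<omega> in P. (AE x in \<Phi> \<omega>. exhausted (\<Psi> \<omega>) (F \<omega>) x) \<and> (AE \<xi> in \<Psi> \<omega>. sated (\<Phi> \<omega>) (F \<omega>) \<xi>)"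
      using AEgood ZP0[OF aP0] ZS0 aP0 aPS
    proof -
      have "AE \<omega> in P. ZS \<omega> = 0" using ZS0 aP0 aPS by simp
      with AEgood ZP0[OF aP0] show ?thesis
        by eventually_elim (use A_P A_S in auto)
    qed
  next
    assume lt: "l\<Phi> < l\<Psi>"
    have aS0: "aS \<noteq> 0"
    proof
      assume "aS = 0"
      then have "ennreal l\<Psi> * L = m" using balS by simp
      also have "\<dots> \<le> ennreal l\<Phi> * L" using balP by (metis add.commute le_iff_add)
      finally have "ennreal l\<Psi> * L \<le> ennreal l\<Phi> * L" .
      moreover have "ennreal l\<Phi> * L < ennreal l\<Psi> * L"
        using lt pos\<Phi> L by (intro ennreal_mult_strict_aux) auto
      ultimately show False by simp
    qed
    show "AE \<omega> in P. (\<forall>x\<in>supp (\<Phi> \<omega>). exhausted (\<Psi> \<omega>) (F \<omega>) x) \<and>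
                         {\<xi>\<in>supp (\<Psi> \<omega>). \<not> sated (\<Phi> \<omega>) (F \<omega>) \<xi>} \<in> sets (\<Psi> \<omega>) \<and>
                         emeasure (\<Psi> \<omega>) {\<xi>\<in>supp (\<Psi> \<omega>). \<not> sated (\<Phi> \<omega>) (F \<omega>) \<xi>} = \<infinity>"
      using AEgood ZSi[OF aS0]
    proof eventually_elim
      case (elim \<omega>)
      have S: "{\<xi>\<in>supp (\<Psi> \<omega>). \<not> sated (\<Phi> \<omega>) (F \<omega>) \<xi>} \<in> sets (\<Psi> \<omega>) \<and>
         emeasure (\<Psi> \<omega>) {\<xi>\<in>supp (\<Psi> \<omega>). \<not> sated (\<Phi> \<omega>) (F \<omega>) \<xi>} = \<infinity>"
        by (rule B_S[OF elim(1) elim(2)])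
      then show ?case using C_P[OF elim(1)] by blast
    qed
  next
    assume lt: "l\<Phi> > l\<Psi>"
    have aP0: "aP \<noteq> 0"
    proof
      assume "aP = 0"
      then have "ennreal l\<Phi> * L = m" using balP by simp
      also have "\<dots> \<le> ennreal l\<Psi> * L" using balS by (metis add.commute le_iff_add)
      finally have "ennreal l\<Phi> * L \<le> ennreal l\<Psi> * L" .
      moreover have "ennreal l\<Psi> * L < ennreal l\<Phi> * L"
        using lt pos\<Psi> L by (intro ennreal_mult_strict_aux) auto
      ultimately show False by simp
    qed
    show "AE \<omega> in P. (\<forall>\<xi>\<in>supp (\<Psi> \<omega>). sated (\<Phi> \<omega>) (F \<omega>) \<xi>) \<and>
                         {x\<in>supp (\<Phi> \<omega>). \<not> exhausted (\<Psi> \<omega>) (F \<omega>) x} \<in> sets (\<Phi> \<omega>) \<and>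
                         emeasure (\<Phi> \<omega>) {x\<in>supp (\<Phi> \<omega>). \<not> exhausted (\<Psi> \<omega>) (F \<omega>) x} = \<infinity>"
      using AEgood ZPi[OF aP0]
    proof eventually_elim
      case (elim \<omega>)
      have S: "{x\<in>supp (\<Phi> \<omega>). \<not> exhausted (\<Psi> \<omega>) (F \<omega>) x} \<in> sets (\<Phi> \<omega>) \<and>
         emeasure (\<Phi> \<omega>) {x\<in>supp (\<Phi> \<omega>). \<not> exhausted (\<Psi> \<omega>) (F \<omega>) x} = \<infinity>"
        by (rule B_P[OF elim(1) elim(2)])
      then show ?case using C_S[OF elim(1)] by blast
    qed
  qed
qed

end
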